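(* Let $\Omega\subset\mathbb{R}^2$ be a box with mesh-aligned endpoints for the mesh size vector $h=(h_1,h_2)$, and write $\overline{\Omega}=\bigcup_i(T_i^1\cup T_i^2)$, where each $T_i^\alpha$ is a translate of $T^\alpha$ ($\alpha=1,2$) by a grid vector. For every $u:\overline{\Omega}_h\to[0,\infty)$ there exists a continuous function $\tilde u:\overline{\Omega}\to[0,\infty)$, linear on each $T_i^\alpha$, such that $u(y)=\tilde u(y)$ for all $y\in\overline{\Omega}_h$, and $D_i^+u(x)=\frac{\partial\tilde u}{\partial x_i}(x)$ for all $x\in\overline{\Omega}_h\setminus\partial_i^+\Omega_h$, $i=1,2$ (the partial derivative understood as the right-sided derivative, $\tilde u$ being linear on the segment $[x,x+h_ie_i]$). Moreover, for $p\in\mathbb{N}$, $$\frac{1}{8p^2}\sum_{x\in\overline{\Omega}_h}u(x)^p\mathbf{h}\le\int_\Omega\tilde u(x)^p\,dx\le8\sum_{x\in\overline{\Omega}_h}u(x)^p\mathbf{h},$$ and $$\int_\Omega|\nabla\tilde u|^2\,dx\le\sum_{i=1}^2\sum_{x\in\overline{\Omega}_h\setminus\partial_i^+\Omega_h}|D_i^+u(x)|^2\mathbf{h}.$$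
   Context: $\mathbb{R}^2_h=\{(h_1z_1,h_2z_2):z_j\in\mathbb{Z}\}$; $\Omega=(a_1,b_1)\times(a_2,b_2)$ with $a_j=k_jh_j$, $b_j=l_jh_j$, $k_j,l_j\in\mathbb{Z}\cup\{\pm\infty\}$, $l_j-k_j>1$; $\overline{\Omega}_h=\overline{\Omega}\cap\mathbb{R}^2_h$, $\partial_i^+\Omega_h=\partial\Omega\cap\mathbb{R}^2_h\cap\{x_i=b_i\}$, $\mathbf{h}=h_1h_2$, $D_i^+u(x)=(u(x+h_ie_i)-u(x))/h_i$. The triangles are $T^1=\operatorname{conv}\{(0,0),(h_1,0),(h_1,h_2)\}$ and $T^2=\operatorname{conv}\{(0,0),(0,h_2),(h_1,h_2)\}$, which partition the mesh box $[0,h_1]\times[0,h_2]$. *)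

theory Defs
  imports "HOL-Analysis.Analysis"
begin

definition box_ereal :: "ereal \<Rightarrow> ereal \<Rightarrow> ereal \<Rightarrow> ereal \<Rightarrow> (real \<times> real) set" where
  "box_ereal a1 b1 a2 b2 =
     {x. a1 < ereal (fst x) \<and> ereal (fst x) < b1 \<and> a2 < ereal (snd x) \<and> ereal (snd x) < b2}"

definition lower_aligned :: "real \<Rightarrow> ereal \<Rightarrow> bool" where
  "lower_aligned h a \<longleftrightarrow> a = -\<infinity> \<or> (\<exists>k::int. a = ereal (h * of_int k))"

definition upper_aligned :: "real \<Rightarrow> ereal \<Rightarrow> bool" where
  "upper_aligned h b \<longleftrightarrow> b = \<infinity> \<or> (\<exists>l::int. b = ereal (h * of_int l))"

definition grid :: "real \<Rightarrow> real \<Rightarrow> (real \<times> real) set" where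
  "grid h1 h2 = {(h1 * of_int z1, h2 * of_int z2) | z1 z2 :: int. True}"

definition tri1 :: "real \<Rightarrow> real \<Rightarrow> int \<Rightarrow> int \<Rightarrow> (real \<times> real) set" where
  "tri1 h1 h2 z1 z2 = convex hull {(h1 * of_int z1, h2 * of_int z2),
      (h1 * of_int z1 + h1, h2 * of_int z2), (h1 * of_int z1 + h1, h2 * of_int z2 + h2)}"

definition tri2 :: "real \<Rightarrow> real \<Rightarrow> int \<Rightarrow> int \<Rightarrow> (real \<times> real) set" where
  "tri2 h1 h2 z1 z2 = convex hull {(h1 * of_int z1, h2 * of_int z2),
      (h1 * of_int z1, h2 * of_int z2 + h2), (h1 * of_int z1 + h1, h2 * of_int z2 + h2)}"

definition affine_on :: "(real \<times> real \<Rightarrow> real) \<Rightarrow> (real \<times> real) set \<Rightarrow> bool" where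
  "affine_on f T \<longleftrightarrow> (\<exists>c0 c1 c2. \<forall>y\<in>T. f y = c0 + c1 * fst y + c2 * snd y)"

definition Dplus1 :: "real \<Rightarrow> (real \<times> real \<Rightarrow> real) \<Rightarrow> real \<times> real \<Rightarrow> real" where
  "Dplus1 h1 u x = (u (fst x + h1, snd x) - u x) / h1"

definition Dplus2 :: "real \<Rightarrow> (real \<times> real \<Rightarrow> real) \<Rightarrow> real \<times> real \<Rightarrow> real" where
  "Dplus2 h2 u x = (u (fst x, snd x + h2) - u x) / h2"

end

theory Submission
  imports Defs
begin


lemma lborel_fubini:
  fixes f :: "real \<times> real \<Rightarrow> ennreal"
  assumes [measurable]: "f \<in> borel_measurable borel"
  shows "(\<integral>\<^sup>+z. f z \<partial>lborel) = (\<integral>\<^sup>+x. \<integral>\<^sup>+y. f (x,y) \<partial>lborel \<partial>lborel)"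
proof -
  have m: "f \<in> borel_measurable (lborel \<Otimes>\<^sub>M lborel)"
    by (simp add: lborel_prod)
  show ?thesis
    using lborel.nn_integral_fst[OF m] by (simp add: lborel_prod)
qed

lemma lborel_fubini2:
  fixes f :: "real \<times> real \<Rightarrow> ennreal"
  assumes [measurable]: "f \<in> borel_measurable borel"
  shows "(\<integral>\<^sup>+z. f z \<partial>lborel) = (\<integral>\<^sup>+y. \<integral>\<^sup>+x. f (x,y) \<partial>lborel \<partial>lborel)"
proof -
  have m: "f \<in> borel_measurable (lborel \<Otimes>\<^sub>M lborel)"
    by (simp add: lborel_prod)
  show ?thesis
    using lborel_pair.nn_integral_snd[OF m] by (simp add: lborel_prod)
qed

lemma lborel_scale:
  fixes f :: "real \<times> real \<Rightarrow> ennreal"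
  assumes [measurable]: "f \<in> borel_measurable borel" and h: "h1 > 0" "h2 > 0"
  shows "(\<integral>\<^sup>+z. f z \<partial>lborel) = ennreal (h1*h2) * (\<integral>\<^sup>+z. f (h1 * fst z, h2 * snd z) \<partial>lborel)"
proof -
  have "(\<integral>\<^sup>+z. f z \<partial>lborel) = (\<integral>\<^sup>+x. \<integral>\<^sup>+y. f (x,y) \<partial>lborel \<partial>lborel)"
    by (rule lborel_fubini) simp
  also have "\<dots> = (\<integral>\<^sup>+x. ennreal h2 * \<integral>\<^sup>+y. f (x, h2 * y) \<partial>lborel \<partial>lborel)"
    apply (rule nn_integral_cong)
    apply (subst nn_integral_real_affine[where c=h2 and t=0])
    using h by auto
  also have "\<dots> = ennreal h2 * (\<integral>\<^sup>+x. \<integral>\<^sup>+y. f (x, h2 * y) \<partial>lborel \<partial>lborel)"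
    by (rule nn_integral_cmult) simp
  also have "(\<integral>\<^sup>+x. \<integral>\<^sup>+y. f (x, h2 * y) \<partial>lborel \<partial>lborel) = ennreal h1 * (\<integral>\<^sup>+x. \<integral>\<^sup>+y. f (h1 * x, h2 * y) \<partial>lborel \<partial>lborel)"
    apply (subst nn_integral_real_affine[where c=h1 and t=0])
    using h by auto
  also have "(\<integral>\<^sup>+x. \<integral>\<^sup>+y. f (h1 * x, h2 * y) \<partial>lborel \<partial>lborel) = (\<integral>\<^sup>+z. f (h1 * fst z, h2 * snd z) \<partial>lborel)"
  proof -
    have "(\<lambda>z. (h1 * fst z, h2 * snd z)) \<in> borel \<rightarrow>\<^sub>M borel"
      by (intro borel_measurable_continuous_onI continuous_intros)
    then have "(\<lambda>z. f (h1 * fst z, h2 * snd z)) \<in> borel_measurable borel"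
      using measurable_compose assms(1) by blast
    from lborel_fubini[OF this] show ?thesis by simp
  qed
  finally show ?thesis using h by (simp add: ennreal_mult mult_ac)
qed


definition Io :: "ereal \<Rightarrow> ereal \<Rightarrow> real set" where
  "Io a b = {x. a < ereal x \<and> ereal x < b}"
definition Ic :: "ereal \<Rightarrow> ereal \<Rightarrow> real set" where
  "Ic a b = {x. a \<le> ereal x \<and> ereal x \<le> b}"

lemma box_ereal_Times: "box_ereal a1 b1 a2 b2 = Io a1 b1 \<times> Io a2 b2"
  by (auto simp: box_ereal_def Io_def)

lemma Io_cases: "a < b \<Longrightarrow> (\<exists>r s. a = ereal r \<and> b = ereal s \<and> Io a b = {r<..<s} \<and> Ic a b = {r..s} \<and> r < s)
  \<or> (\<exists>r. a = ereal r \<and> b = \<infinity> \<and> Io a b = {r<..} \<and> Ic a b = {r..})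
  \<or> (\<exists>s. a = -\<infinity> \<and> b = ereal s \<and> Io a b = {..<s} \<and> Ic a b = {..s})
  \<or> (a = -\<infinity> \<and> b = \<infinity> \<and> Io a b = UNIV \<and> Ic a b = UNIV)"
  by (cases a; cases b) (auto simp: Io_def Ic_def)

lemma closure_Io: "a < b \<Longrightarrow> closure (Io a b) = Ic a b"
  using Io_cases[of a b] by auto

lemma open_Io: "a < b \<Longrightarrow> open (Io a b)"
  using Io_cases[of a b] by auto

lemma Io_sub_Ic: "Io a b \<subseteq> Ic a b"
  by (auto simp: Io_def Ic_def)

definition Iz :: "real \<Rightarrow> ereal \<Rightarrow> ereal \<Rightarrow> int set" where
  "Iz h a b = {z. h * of_int z \<in> Ic a b}"

lemma floor_in_Iz:
  assumes h: "h > 0" and la: "lower_aligned h a" and ub: "upper_aligned h b" and x: "h * x \<in> Io a b"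
  shows "\<lfloor>x\<rfloor> \<in> Iz h a b" "\<lfloor>x\<rfloor> + 1 \<in> Iz h a b"
proof -
  have lo: "a \<le> ereal (h * of_int \<lfloor>x\<rfloor>)"
  proof (cases "a = -\<infinity>")
    case False
    then obtain k where k: "a = ereal (h * of_int k)" using la by (auto simp: lower_aligned_def)
    then have "h * k < h * x" using x by (auto simp: Io_def)
    then have "k < x" using h by simp
    then have "k \<le> \<lfloor>x\<rfloor>" by linarith
    then show ?thesis using k h by simp
  qed simp
  have hi: "ereal (h * (of_int \<lfloor>x\<rfloor> + 1)) \<le> b"
  proof (cases "b = \<infinity>")
    case False
    then obtain l where l: "b = ereal (h * of_int l)" using ub by (auto simp: upper_aligned_def)
    then have "h * x < h * l" using x by (auto simp: Io_def)
    then have "x < l" using h by simp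
    then have "\<lfloor>x\<rfloor> + 1 \<le> l" by linarith
    then have "of_int \<lfloor>x\<rfloor> + 1 \<le> (of_int l :: real)" by linarith
    then show ?thesis using l h by simp
  qed simp
  have a1: "ereal (h * of_int \<lfloor>x\<rfloor>) \<le> ereal (h * (of_int \<lfloor>x\<rfloor> + 1))" using h by simp
  have a2: "a \<le> ereal (h * (of_int \<lfloor>x\<rfloor> + 1))" using lo a1 order_trans by blast
  have a3: "ereal (h * of_int \<lfloor>x\<rfloor>) \<le> b" using hi a1 order_trans by blast
  show "\<lfloor>x\<rfloor> \<in> Iz h a b" using lo a3 by (simp add: Iz_def Ic_def)
  show "\<lfloor>x\<rfloor> + 1 \<in> Iz h a b" using a2 hi by (simp add: Iz_def Ic_def)
qed

lemma Iz_succ: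
  assumes h: "h > 0" and ub: "upper_aligned h b" and z: "z \<in> Iz h a b" and ne: "ereal (h * of_int z) \<noteq> b"
  shows "z + 1 \<in> Iz h a b"
proof -
  have zb: "ereal (h * of_int z) < b" using z ne by (auto simp: Iz_def Ic_def)
  have hi: "ereal (h * (of_int z + 1)) \<le> b"
  proof (cases "b = \<infinity>")
    case False
    then obtain l where l: "b = ereal (h * of_int l)" using ub by (auto simp: upper_aligned_def)
    then have "h * z < h * l" using zb by simp
    then have "z < l" using h by simp
    then have "of_int z + 1 \<le> (of_int l :: real)" by linarith
    then show ?thesis using l h by simp
  qed simp
  have "a \<le> ereal (h * of_int z)" using z by (auto simp: Iz_def Ic_def)
  also have "\<dots> \<le> ereal (h * (of_int z + 1))" using h by simp
  finally show ?thesis using hi by (simp add: Iz_def Ic_def)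
qed

lemma Iz_pred:
  assumes h: "h > 0" and la: "lower_aligned h a" and z: "z \<in> Iz h a b" and ne: "ereal (h * of_int z) \<noteq> a"
  shows "z - 1 \<in> Iz h a b"
proof -
  have zb: "a < ereal (h * of_int z)" using z ne by (auto simp: Iz_def Ic_def)
  have lo: "a \<le> ereal (h * (of_int z - 1))"
  proof (cases "a = -\<infinity>")
    case False
    then obtain l where l: "a = ereal (h * of_int l)" using la by (auto simp: lower_aligned_def)
    then have "h * l < h * z" using zb by simp
    then have "l < z" using h by simp
    then have "(of_int l :: real) \<le> of_int z - 1" by linarith
    then show ?thesis using l h by simp
  qed simp
  have "ereal (h * (of_int z - 1)) \<le> ereal (h * of_int z)" using h by simp
  also have "\<dots> \<le> b" using z by (auto simp: Iz_def Ic_def)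
  finally show ?thesis using lo by (simp add: Iz_def Ic_def)
qed

lemma Iz_nb:
  assumes h: "h > 0" and la: "lower_aligned h a" and ub: "upper_aligned h b" and w: "a + ereal h < b"
    and z: "z \<in> Iz h a b"
  shows "z + 1 \<in> Iz h a b \<or> z - 1 \<in> Iz h a b"
proof (cases "ereal (h * of_int z) = b")
  case True
  have "ereal (h * of_int z) \<noteq> a"
  proof
    assume "ereal (h * of_int z) = a"
    with True w have "b + ereal h < b" by simp
    moreover have "b \<le> b + ereal h" using h by (simp add: True[symmetric])
    ultimately show False by simp
  qed
  then show ?thesis using Iz_pred[OF h la z] by simp
next
  case False
  then show ?thesis using Iz_succ[OF h ub z] by simp
qed

lemma Io_cell:
  assumes h: "h > 0" and z: "z \<in> Iz h a b" "z + 1 \<in> Iz h a b" and s: "of_int z < s" "s < of_int z + 1"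
  shows "h * s \<in> Io a b"
proof -
  have "a \<le> ereal (h * of_int z)" using z by (auto simp: Iz_def Ic_def)
  also have "\<dots> < ereal (h * s)" using h s by simp
  finally have 1: "a < ereal (h * s)" .
  have "ereal (h * s) < ereal (h * (of_int z + 1))" using h s by simp
  also have "\<dots> \<le> b" using z by (auto simp: Iz_def Ic_def)
  finally show ?thesis using 1 by (simp add: Io_def)
qed

lemma Ic_cell:
  assumes h: "h > 0" and z: "z \<in> Iz h a b" "z + 1 \<in> Iz h a b" and s: "of_int z \<le> s" "s \<le> of_int z + 1"
  shows "h * s \<in> Ic a b"
proof -
  have "a \<le> ereal (h * of_int z)" using z by (auto simp: Iz_def Ic_def)
  also have "\<dots> \<le> ereal (h * s)" using h s by simp
  finally have 1: "a \<le> ereal (h * s)" .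
  have "ereal (h * s) \<le> ereal (h * (of_int z + 1))" using h s by simp
  also have "\<dots> \<le> b" using z by (auto simp: Iz_def Ic_def)
  finally show ?thesis using 1 by (simp add: Ic_def)
qed


definition phi :: "real \<Rightarrow> real \<Rightarrow> real" where
  "phi a b = max 0 (1 - max \<bar>a\<bar> (max \<bar>b\<bar> \<bar>a - b\<bar>))"

definition Vf :: "(int \<times> int \<Rightarrow> real) \<Rightarrow> real \<Rightarrow> real \<Rightarrow> real" where
  "Vf U s t = (\<Sum>(i,j) \<in> {\<lfloor>s\<rfloor>-1..\<lfloor>s\<rfloor>+1} \<times> {\<lfloor>t\<rfloor>-1..\<lfloor>t\<rfloor>+1}. U (i,j) * phi (s - of_int i) (t - of_int j))"

lemma phi_nonneg: "phi a b \<ge> 0" by (simp add: phi_def)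

lemma phi_supp: "phi a b \<noteq> 0 \<Longrightarrow> \<bar>a\<bar> < 1 \<and> \<bar>b\<bar> < 1"
  by (auto simp: phi_def max_def split: if_splits)

lemma continuous_phi: "continuous_on UNIV (\<lambda>x. phi (f x) (g x))" if "continuous_on UNIV f" "continuous_on UNIV g"
  for f g :: "'a::topological_space \<Rightarrow> real"
  unfolding phi_def by (intro continuous_intros that)

lemma Vf_eq:
  assumes F: "finite F" and supp: "\<And>i j. phi (s - of_int i) (t - of_int j) \<noteq> 0 \<Longrightarrow> (i,j) \<in> F"
  shows "Vf U s t = (\<Sum>(i,j) \<in> F. U (i,j) * phi (s - of_int i) (t - of_int j))"
proof -
  let ?N = "{\<lfloor>s\<rfloor>-1..\<lfloor>s\<rfloor>+1} \<times> {\<lfloor>t\<rfloor>-1..\<lfloor>t\<rfloor>+1}"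
  let ?g = "\<lambda>(i,j). U (i,j) * phi (s - of_int i) (t - of_int j)"
  have N: "phi (s - of_int i) (t - of_int j) \<noteq> 0 \<Longrightarrow> \<lfloor>s\<rfloor> - 1 \<le> i \<and> i \<le> \<lfloor>s\<rfloor> + 1 \<and> \<lfloor>t\<rfloor> - 1 \<le> j \<and> j \<le> \<lfloor>t\<rfloor> + 1" for i j
  proof -
    assume "phi (s - of_int i) (t - of_int j) \<noteq> 0"
    from phi_supp[OF this] have "\<bar>s - of_int i\<bar> < 1" "\<bar>t - of_int j\<bar> < 1" by auto
    then show ?thesis by (auto simp: abs_less_iff) linarith+
  qed
  have "sum ?g ?N = sum ?g (?N \<inter> F)"
    by (rule sum.mono_neutral_right) (auto dest: supp)
  also have "\<dots> = sum ?g F"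
    by (rule sum.mono_neutral_left) (auto simp: F dest: N)
  finally show ?thesis by (simp add: Vf_def)
qed

lemma int01: "\<bar>a - of_int m\<bar> < 1 \<Longrightarrow> 0 \<le> a \<Longrightarrow> a \<le> 1 \<Longrightarrow> m = 0 \<or> m = 1" for a :: real
proof -
  assume "\<bar>a - of_int m\<bar> < 1" "0 \<le> a" "a \<le> 1"
  then have "-1 < m" "m < 2" by (auto simp: abs_less_iff)
  then show ?thesis by linarith
qed

lemma supp_cell:
  assumes a: "0 \<le> a" "a \<le> 1" and b: "0 \<le> b" "b \<le> 1"
    and nz: "phi (of_int i + a - of_int i') (of_int j + b - of_int j') \<noteq> 0"
  shows "(i',j') \<in> {(i,j),(i+1,j),(i,j+1),(i+1,j+1)}"
proof -
  from phi_supp[OF nz] have "\<bar>a - of_int (i' - i)\<bar> < 1" "\<bar>b - of_int (j' - j)\<bar> < 1" by (simp_all add: algebra_simps)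
  from int01[OF this(1) a] int01[OF this(2) b] show ?thesis by auto
qed

lemma Vf_cell:
  assumes a: "0 \<le> a" "a \<le> 1" and b: "0 \<le> b" "b \<le> 1"
  shows "Vf U (of_int i + a) (of_int j + b) = U (i,j) * phi a b + U (i+1,j) * phi (a - 1) b
     + U (i,j+1) * phi a (b - 1) + U (i+1,j+1) * phi (a - 1) (b - 1)"
proof -
  have "\<And>i' j'. phi (of_int i + a - of_int i') (of_int j + b - of_int j') \<noteq> 0 \<Longrightarrow> (i',j') \<in> {(i,j),(i+1,j),(i,j+1),(i+1,j+1)}"
    by (rule supp_cell[OF a b])
  then have "Vf U (of_int i + a) (of_int j + b) = (\<Sum>(i',j') \<in> {(i,j),(i+1,j),(i,j+1),(i+1,j+1)}. U (i',j') * phi (of_int i + a - of_int i') (of_int j + b - of_int j'))"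
    by (intro Vf_eq) auto
  then show ?thesis by (simp add: algebra_simps)
qed

lemma phi_tri1:
  assumes "0 \<le> b" "b \<le> a" "a \<le> 1"
  shows "phi a b = 1 - a" "phi (a - 1) b = a - b" "phi a (b - 1) = 0" "phi (a - 1) (b - 1) = b"
  using assms unfolding phi_def by (simp_all add: max_def abs_if)

lemma phi_tri2:
  assumes "0 \<le> a" "a \<le> b" "b \<le> 1"
  shows "phi a b = 1 - b" "phi (a - 1) b = 0" "phi a (b - 1) = b - a" "phi (a - 1) (b - 1) = a"
  using assms unfolding phi_def by (simp_all add: max_def abs_if)

lemma Vf_tri1:
  assumes "0 \<le> b" "b \<le> a" "a \<le> 1"
  shows "Vf U (of_int i + a) (of_int j + b) = U (i,j) * (1 - a) + U (i+1,j) * (a - b) + U (i+1,j+1) * b"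
  using Vf_cell[of a b U i j] phi_tri1[OF assms] assms by simp

lemma Vf_tri2:
  assumes "0 \<le> a" "a \<le> b" "b \<le> 1"
  shows "Vf U (of_int i + a) (of_int j + b) = U (i,j) * (1 - b) + U (i,j+1) * (b - a) + U (i+1,j+1) * a"
  using Vf_cell[of a b U i j] phi_tri2[OF assms] assms by simp

lemma Vf_grid: "Vf U (of_int i) (of_int j) = U (i,j)"
  using Vf_tri1[of 0 0 U i j] by simp

lemma Vf_nonneg: "(\<And>z. U z \<ge> 0) \<Longrightarrow> Vf U s t \<ge> 0"
  unfolding Vf_def by (intro sum_nonneg) (auto intro!: mult_nonneg_nonneg phi_nonneg)

lemma Vf_ge: "(\<And>z. U z \<ge> 0) \<Longrightarrow> Vf U s t \<ge> U (i,j) * phi (s - of_int i) (t - of_int j)"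
proof -
  assume U: "\<And>z. U z \<ge> 0"
  let ?F = "{\<lfloor>s\<rfloor>-1..\<lfloor>s\<rfloor>+1} \<times> {\<lfloor>t\<rfloor>-1..\<lfloor>t\<rfloor>+1} \<union> {(i,j)}"
  have "Vf U s t = (\<Sum>(i,j) \<in> ?F. U (i,j) * phi (s - of_int i) (t - of_int j))"
  proof (rule Vf_eq)
    fix i' j' assume "phi (s - of_int i') (t - of_int j') \<noteq> 0"
    from phi_supp[OF this] have "\<bar>s - of_int i'\<bar> < 1" "\<bar>t - of_int j'\<bar> < 1" by auto
    then show "(i',j') \<in> ?F" by (auto simp: abs_less_iff) linarith+
  qed simp
  also have "\<dots> \<ge> (\<Sum>(i,j) \<in> {(i,j)}. U (i,j) * phi (s - of_int i) (t - of_int j))"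
    by (rule sum_mono2) (auto intro!: mult_nonneg_nonneg phi_nonneg U)
  finally show ?thesis by simp
qed

lemma supp_near:
  fixes x y :: real
  assumes "\<bar>x - of_int i\<bar> < 1" "\<bar>x - y\<bar> < 1"
  shows "\<lfloor>y\<rfloor> - 2 \<le> i \<and> i \<le> \<lfloor>y\<rfloor> + 2"
proof -
  have f: "of_int \<lfloor>y\<rfloor> \<le> y" "y < of_int \<lfloor>y\<rfloor> + 1" by linarith+
  have e: "x - of_int i < 1" "of_int i - x < 1" "x - y < 1" "y - x < 1" using assms by (auto simp: abs_less_iff)
  have "real_of_int \<lfloor>y\<rfloor> - 2 < of_int i"
    using f e by linarith
  moreover have "(of_int i :: real) < of_int \<lfloor>y\<rfloor> + 3"
    using f e by linarith
  ultimately have "of_int (\<lfloor>y\<rfloor> - 2) < (of_int i :: real)" "(of_int i :: real) < of_int (\<lfloor>y\<rfloor> + 3)"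
    by simp_all
  then have "\<lfloor>y\<rfloor> - 2 < i" "i < \<lfloor>y\<rfloor> + 3" by (simp_all only: of_int_less_iff)
  then show ?thesis by linarith
qed

lemma continuous_Vf: "continuous_on UNIV (\<lambda>x. Vf U (fst x) (snd x))"
proof -
  have "isCont (\<lambda>x. Vf U (fst x) (snd x)) x0" for x0 :: "real \<times> real"
  proof -
    let ?F = "{\<lfloor>fst x0\<rfloor>-2..\<lfloor>fst x0\<rfloor>+2} \<times> {\<lfloor>snd x0\<rfloor>-2..\<lfloor>snd x0\<rfloor>+2}"
    let ?g = "\<lambda>x. \<Sum>(i,j) \<in> ?F. U (i,j) * phi (fst x - of_int i) (snd x - of_int j)"
    have ci: "continuous_on UNIV (\<lambda>x. U (i,j) * phi (fst x - of_int i) (snd x - of_int j))" for i j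
      apply (rule continuous_on_mult[OF continuous_on_const])
      apply (rule continuous_phi)
       apply (intro continuous_on_diff continuous_on_fst continuous_on_snd continuous_on_id continuous_on_const)+
      done
    have cg: "continuous_on UNIV ?g"
      unfolding case_prod_beta by (rule continuous_on_sum) (rule ci)
    have ctg: "continuous (at x0 within UNIV) ?g"
      using cg continuous_on_eq_continuous_within by blast
    have eqg: "?g x = Vf U (fst x) (snd x)" if "dist x x0 < 1" for x
    proof -
      have d: "\<bar>fst x - fst x0\<bar> < 1" "\<bar>snd x - snd x0\<bar> < 1"
        using that dist_fst_le[of x x0] dist_snd_le[of x x0] by (auto simp: dist_real_def)
      show ?thesis
      proof (rule Vf_eq[symmetric])
        fix i j assume "phi (fst x - of_int i) (snd x - of_int j) \<noteq> 0"
        from phi_supp[OF this] have "\<bar>fst x - of_int i\<bar> < 1" "\<bar>snd x - of_int j\<bar> < 1" by auto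
        from supp_near[OF this(1) d(1)] supp_near[OF this(2) d(2)] show "(i,j) \<in> ?F" by simp
      qed simp
    qed
    have "continuous (at x0 within UNIV) (\<lambda>x. Vf U (fst x) (snd x))"
      by (rule continuous_transform_within[OF ctg zero_less_one UNIV_I]) (rule eqg)
    then show ?thesis by simp
  qed
  then show ?thesis by (simp add: continuous_at_imp_continuous_on)
qed


lemma affine_tri1:
  assumes h: "h1 > 0" "h2 > 0"
  shows "affine_on (\<lambda>x. Vf U (fst x / h1) (snd x / h2)) (tri1 h1 h2 z1 z2)"
proof -
  let ?c1 = "U (z1+1,z2) - U (z1,z2)" and ?c2 = "U (z1+1,z2+1) - U (z1+1,z2)"
  have "\<forall>y\<in>tri1 h1 h2 z1 z2. Vf U (fst y / h1) (snd y / h2) =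
     (U (z1,z2) - ?c1 * of_int z1 - ?c2 * of_int z2) + (?c1 / h1) * fst y + (?c2 / h2) * snd y"
  proof
    fix y assume "y \<in> tri1 h1 h2 z1 z2"
    then obtain p q r where pqr: "0 \<le> p" "0 \<le> q" "0 \<le> r" "p + q + r = 1"
      and y: "y = p *\<^sub>R (h1 * of_int z1, h2 * of_int z2) + q *\<^sub>R (h1 * of_int z1 + h1, h2 * of_int z2)
                + r *\<^sub>R (h1 * of_int z1 + h1, h2 * of_int z2 + h2)"
      unfolding tri1_def convex_hull_3 by blast
    have p: "p = 1 - q - r" using pqr by simp
    have e1: "fst y / h1 = of_int z1 + (q + r)" using h unfolding y p by (simp add: field_simps)
    have e2: "snd y / h2 = of_int z2 + r" using h unfolding y p by (simp add: field_simps)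
    have "Vf U (fst y / h1) (snd y / h2) = U (z1,z2) * (1 - (q+r)) + U (z1+1,z2) * ((q+r) - r) + U (z1+1,z2+1) * r"
      unfolding e1 e2 by (rule Vf_tri1) (use pqr in auto)
    also have "\<dots> = (U (z1,z2) - ?c1 * of_int z1 - ?c2 * of_int z2) + (?c1 / h1) * fst y + (?c2 / h2) * snd y"
    proof -
      have "fst y = h1 * (of_int z1 + (q + r))" "snd y = h2 * (of_int z2 + r)"
        using e1 e2 h by (simp_all add: field_simps)
      then show ?thesis using h by (simp add: field_simps)
    qed
    finally show "Vf U (fst y / h1) (snd y / h2) = (U (z1,z2) - ?c1 * of_int z1 - ?c2 * of_int z2) + (?c1 / h1) * fst y + (?c2 / h2) * snd y" .
  qed
  then show ?thesis unfolding affine_on_def by blast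
qed

lemma affine_tri2:
  assumes h: "h1 > 0" "h2 > 0"
  shows "affine_on (\<lambda>x. Vf U (fst x / h1) (snd x / h2)) (tri2 h1 h2 z1 z2)"
proof -
  let ?c1 = "U (z1+1,z2+1) - U (z1,z2+1)" and ?c2 = "U (z1,z2+1) - U (z1,z2)"
  have "\<forall>y\<in>tri2 h1 h2 z1 z2. Vf U (fst y / h1) (snd y / h2) =
     (U (z1,z2) - ?c1 * of_int z1 - ?c2 * of_int z2) + (?c1 / h1) * fst y + (?c2 / h2) * snd y"
  proof
    fix y assume "y \<in> tri2 h1 h2 z1 z2"
    then obtain p q r where pqr: "0 \<le> p" "0 \<le> q" "0 \<le> r" "p + q + r = 1"
      and y: "y = p *\<^sub>R (h1 * of_int z1, h2 * of_int z2) + q *\<^sub>R (h1 * of_int z1, h2 * of_int z2 + h2)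
                + r *\<^sub>R (h1 * of_int z1 + h1, h2 * of_int z2 + h2)"
      unfolding tri2_def convex_hull_3 by blast
    have p: "p = 1 - q - r" using pqr by simp
    have e1: "fst y / h1 = of_int z1 + r" using h unfolding y p by (simp add: field_simps)
    have e2: "snd y / h2 = of_int z2 + (q + r)" using h unfolding y p by (simp add: field_simps)
    have "Vf U (fst y / h1) (snd y / h2) = U (z1,z2) * (1 - (q+r)) + U (z1,z2+1) * ((q+r) - r) + U (z1+1,z2+1) * r"
      unfolding e1 e2 by (rule Vf_tri2) (use pqr in auto)
    also have "\<dots> = (U (z1,z2) - ?c1 * of_int z1 - ?c2 * of_int z2) + (?c1 / h1) * fst y + (?c2 / h2) * snd y"
    proof -
      have "fst y = h1 * (of_int z1 + r)" "snd y = h2 * (of_int z2 + (q + r))"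
        using e1 e2 h by (simp_all add: field_simps)
      then show ?thesis using h by (simp add: field_simps)
    qed
    finally show "Vf U (fst y / h1) (snd y / h2) = (U (z1,z2) - ?c1 * of_int z1 - ?c2 * of_int z2) + (?c1 / h1) * fst y + (?c2 / h2) * snd y" .
  qed
  then show ?thesis unfolding affine_on_def by blast
qed

lemma deriv_dir1:
  assumes h: "h1 > 0" "h2 > 0"
  shows "((\<lambda>t. Vf U ((h1 * of_int z1 + t) / h1) (h2 * of_int z2 / h2)) has_real_derivative
           (U (z1+1,z2) - U (z1,z2)) / h1) (at_right 0)"
proof -
  let ?g = "\<lambda>t. U (z1,z2) + (U (z1+1,z2) - U (z1,z2)) * (t / h1)"
  have d1: "(?g has_real_derivative (U (z1+1,z2) - U (z1,z2)) / h1) (at 0 within {0..})"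
    using h by (auto intro!: derivative_eq_intros)
  have eq: "?g t = Vf U ((h1 * of_int z1 + t) / h1) (h2 * of_int z2 / h2)" if "t \<in> {0..}" "dist t 0 < h1" for t
  proof -
    have t: "0 \<le> t / h1" "t / h1 \<le> 1" using that h by (auto simp: dist_real_def)
    have "(h1 * of_int z1 + t) / h1 = of_int z1 + t / h1" using h by (simp add: add_divide_distrib)
    moreover have "h2 * of_int z2 / h2 = of_int z2 + 0" using h by simp
    ultimately show ?thesis using Vf_tri1[of 0 "t/h1" U z1 z2] t by (simp add: algebra_simps)
  qed
  have "((\<lambda>t. Vf U ((h1 * of_int z1 + t) / h1) (h2 * of_int z2 / h2)) has_real_derivative
           (U (z1+1,z2) - U (z1,z2)) / h1) (at 0 within {0..})"
    by (rule has_field_derivative_transform_within[OF d1, of h1]) (use h eq in auto)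
  then show ?thesis by (rule has_field_derivative_subset) auto
qed

lemma deriv_dir2:
  assumes h: "h1 > 0" "h2 > 0"
  shows "((\<lambda>t. Vf U (h1 * of_int z1 / h1) ((h2 * of_int z2 + t) / h2)) has_real_derivative
           (U (z1,z2+1) - U (z1,z2)) / h2) (at_right 0)"
proof -
  let ?g = "\<lambda>t. U (z1,z2) + (U (z1,z2+1) - U (z1,z2)) * (t / h2)"
  have d1: "(?g has_real_derivative (U (z1,z2+1) - U (z1,z2)) / h2) (at 0 within {0..})"
    using h by (auto intro!: derivative_eq_intros)
  have eq: "?g t = Vf U (h1 * of_int z1 / h1) ((h2 * of_int z2 + t) / h2)" if "t \<in> {0..}" "dist t 0 < h2" for t
  proof -
    have t: "0 \<le> t / h2" "t / h2 \<le> 1" using that h by (auto simp: dist_real_def)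
    have "(h2 * of_int z2 + t) / h2 = of_int z2 + t / h2" using h by (simp add: add_divide_distrib)
    moreover have "h1 * of_int z1 / h1 = of_int z1 + 0" using h by simp
    ultimately show ?thesis using Vf_tri2[of 0 "t/h2" U z1 z2] t by (simp add: algebra_simps)
  qed
  have "((\<lambda>t. Vf U (h1 * of_int z1 / h1) ((h2 * of_int z2 + t) / h2)) has_real_derivative
           (U (z1,z2+1) - U (z1,z2)) / h2) (at 0 within {0..})"
    by (rule has_field_derivative_transform_within[OF d1, of h2]) (use h eq in auto)
  then show ?thesis by (rule has_field_derivative_subset) auto
qed


lemma shift_integral:
  fixes f :: "real \<times> real \<Rightarrow> ennreal" and c :: "real \<times> real"
  assumes [measurable]: "f \<in> borel_measurable borel"
  shows "(\<integral>\<^sup>+x. f x \<partial>lborel) = (\<integral>\<^sup>+x. f (c + x) \<partial>lborel)"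
proof -
  have "(\<integral>\<^sup>+x. f x \<partial>lborel) = (\<integral>\<^sup>+x. f x \<partial>distr lborel borel ((+) c))"
    by (simp add: lborel_distr_plus)
  also have "\<dots> = (\<integral>\<^sup>+x. f (c + x) \<partial>lborel)"
    by (subst nn_integral_distr) auto
  finally show ?thesis .
qed

lemma Dpow:
  fixes c s :: real
  shows "((\<lambda>y. (c + s * y) ^ Suc p / real (Suc p)) has_real_derivative s * (c + s * y) ^ p) (at y)"
proof -
  have g: "((\<lambda>y. c + s * y) has_real_derivative s) (at y)" by (auto intro!: derivative_eq_intros)
  have "((\<lambda>y. (c + s * y) ^ Suc p) has_real_derivative real (Suc p) * (c + s * y) ^ (Suc p - Suc 0) * s) (at y)"
    using DERIV_chain2[where f="\<lambda>x. x ^ Suc p" and g="\<lambda>y. c + s * y" and x=y, OF DERIV_pow g] .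
  then have "((\<lambda>y. (c + s * y) ^ Suc p / real (Suc p)) has_real_derivative real (Suc p) * (c + s * y) ^ (Suc p - Suc 0) * s / real (Suc p)) (at y)"
    by (rule DERIV_cdivide)
  then show ?thesis by (rule DERIV_cong) (simp del: of_nat_Suc)
qed

lemma L_pow_left:
  fixes x :: real assumes "0 \<le> x"
  shows "(\<integral>\<^sup>+y. ennreal ((x - y) ^ p) * indicator {0..x} y \<partial>lborel) = ennreal (x ^ (p+1) / (p+1))"
proof -
  have "(\<integral>\<^sup>+y. ennreal ((x - y) ^ p) * indicator {0..x} y \<partial>lborel) =
     ennreal ((\<lambda>y. - ((x + (-1) * y) ^ Suc p / real (Suc p))) x - (\<lambda>y. - ((x + (-1) * y) ^ Suc p / real (Suc p))) 0)"
    apply (rule nn_integral_FTC_Icc)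
       apply simp
      apply (rule DERIV_cong[OF DERIV_minus[OF Dpow]])
      apply simp
     apply simp
    using assms apply simp
    done
  then show ?thesis by simp
qed

lemma L_pow_right:
  fixes x :: real assumes "0 \<le> x"
  shows "(\<integral>\<^sup>+y. ennreal (y ^ p) * indicator {0..x} y \<partial>lborel) = ennreal (x ^ (p+1) / (p+1))"
proof -
  have "(\<integral>\<^sup>+y. ennreal (y ^ p) * indicator {0..x} y \<partial>lborel) =
     ennreal ((\<lambda>y. (0 + 1 * y) ^ Suc p / real (Suc p)) x - (\<lambda>y. (0 + 1 * y) ^ Suc p / real (Suc p)) 0)"
    apply (rule nn_integral_FTC_Icc)
       apply simp
      apply (rule DERIV_cong[OF Dpow])
      apply simp
     apply simp
    using assms apply simp
    done
  then show ?thesis by simp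
qed

lemma L_pow_one:
  fixes x :: real assumes "x \<le> 1"
  shows "(\<integral>\<^sup>+y. ennreal ((1 - y) ^ p) * indicator {x..1} y \<partial>lborel) = ennreal ((1 - x) ^ (p+1) / (p+1))"
proof -
  have "(\<integral>\<^sup>+y. ennreal ((1 - y) ^ p) * indicator {x..1} y \<partial>lborel) =
     ennreal ((\<lambda>y. - ((1 + (-1) * y) ^ Suc p / real (Suc p))) 1 - (\<lambda>y. - ((1 + (-1) * y) ^ Suc p / real (Suc p))) x)"
    apply (rule nn_integral_FTC_Icc)
       apply simp
      apply (rule DERIV_cong[OF DERIV_minus[OF Dpow]])
      apply simp
     apply simp
    using assms apply simp
    done
  then show ?thesis by simp
qed

lemma L_outer1:
  "(\<integral>\<^sup>+x. ennreal (x ^ (p+1) / (p+1)) * indicator {0..1} x \<partial>lborel) = ennreal (1 / ((p+1) * (p+2)))"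
proof -
  have "(\<integral>\<^sup>+x. ennreal (x ^ (p+1) / (p+1)) * indicator {0..1} x \<partial>lborel) =
     ennreal ((\<lambda>x. (0 + 1 * x) ^ Suc (Suc p) / real (Suc (Suc p)) / (p+1)) 1 - (\<lambda>x. (0 + 1 * x) ^ Suc (Suc p) / real (Suc (Suc p)) / (p+1)) 0)"
    apply (rule nn_integral_FTC_Icc)
       apply simp
      apply (rule DERIV_cong[OF DERIV_cdivide[OF Dpow]])
      apply simp
     apply simp
    apply simp
    done
  then show ?thesis by (simp add: field_simps)
qed

lemma L_outer2:
  "(\<integral>\<^sup>+x. ennreal ((1 - x) ^ (p+1) / (p+1)) * indicator {0..1} x \<partial>lborel) = ennreal (1 / ((p+1) * (p+2)))"
proof -
  have "(\<integral>\<^sup>+x. ennreal ((1 - x) ^ (p+1) / (p+1)) * indicator {0..1} x \<partial>lborel) =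
     ennreal ((\<lambda>x. - ((1 + (-1) * x) ^ Suc (Suc p) / real (Suc (Suc p)) / (p+1))) 1 - (\<lambda>x. - ((1 + (-1) * x) ^ Suc (Suc p) / real (Suc (Suc p)) / (p+1))) 0)"
    apply (rule nn_integral_FTC_Icc)
       apply simp
      apply (rule DERIV_cong[OF DERIV_minus[OF DERIV_cdivide[OF Dpow]]])
      apply simp
     apply simp
    apply simp
    done
  then show ?thesis by (simp add: field_simps)
qed


definition T1 :: "(real \<times> real) set" where "T1 = {z. 0 \<le> snd z \<and> snd z \<le> fst z \<and> fst z \<le> 1}"
definition T2 :: "(real \<times> real) set" where "T2 = {z. 0 \<le> fst z \<and> fst z \<le> snd z \<and> snd z \<le> 1}"

lemma T1_closed: "closed T1"
  unfolding T1_def by (intro closed_Collect_conj closed_Collect_le continuous_intros)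
lemma T2_closed: "closed T2"
  unfolding T2_def by (intro closed_Collect_conj closed_Collect_le continuous_intros)
lemma T1_borel[measurable]: "T1 \<in> sets borel"
  using T1_closed by simp
lemma T2_borel[measurable]: "T2 \<in> sets borel"
  using T2_closed by simp

lemma meas_ci:
  fixes g :: "'a::topological_space \<Rightarrow> real"
  assumes "continuous_on UNIV g" and [measurable]: "S \<in> sets borel"
  shows "(\<lambda>z. ennreal (g z) * indicator S z) \<in> borel_measurable borel"
proof -
  have [measurable]: "g \<in> borel_measurable borel" by (rule borel_measurable_continuous_onI[OF assms(1)])
  show ?thesis by measurable
qed

lemma ind_T1_a: "indicator T1 (a,b) = (indicator {0..1} a * indicator {0..a} b :: ennreal)"
  by (auto simp: T1_def split: split_indicator)
lemma ind_T1_b: "indicator T1 (a,b) = (indicator {0..1} b * indicator {b..1} a :: ennreal)"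
  by (auto simp: T1_def split: split_indicator)
lemma ind_T2_b: "indicator T2 (a,b) = (indicator {0..1} b * indicator {0..b} a :: ennreal)"
  by (auto simp: T2_def split: split_indicator)

lemma J2: "(\<integral>\<^sup>+z. ennreal ((fst z - snd z) ^ p) * indicator T1 z \<partial>lborel) = ennreal (1 / ((real p + 1) * (real p + 2)))"
proof -
  have "(\<integral>\<^sup>+z. ennreal ((fst z - snd z) ^ p) * indicator T1 z \<partial>lborel)
      = (\<integral>\<^sup>+a. \<integral>\<^sup>+b. ennreal ((a - b) ^ p) * indicator T1 (a,b) \<partial>lborel \<partial>lborel)"
    by (subst lborel_fubini) (auto intro!: meas_ci continuous_intros)
  also have "\<dots> = (\<integral>\<^sup>+a. ennreal (a ^ (p+1) / (p+1)) * indicator {0..1} a \<partial>lborel)"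
  proof (rule nn_integral_cong)
    fix a :: real
    have "(\<integral>\<^sup>+b. ennreal ((a - b) ^ p) * indicator T1 (a,b) \<partial>lborel)
       = (\<integral>\<^sup>+b. (ennreal ((a - b) ^ p) * indicator {0..a} b) * indicator {0..1} a \<partial>lborel)"
      by (rule nn_integral_cong) (simp add: ind_T1_a mult_ac)
    also have "\<dots> = (\<integral>\<^sup>+b. ennreal ((a - b) ^ p) * indicator {0..a} b \<partial>lborel) * indicator {0..1} a"
      by (rule nn_integral_multc) simp
    also have "\<dots> = ennreal (a ^ (p+1) / (p+1)) * indicator {0..1} a"
      by (cases "a \<in> {0..1}") (auto simp: L_pow_left)
    finally show "(\<integral>\<^sup>+b. ennreal ((a - b) ^ p) * indicator T1 (a,b) \<partial>lborel) = ennreal (a ^ (p+1) / (p+1)) * indicator {0..1} a" .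
  qed
  also have "\<dots> = ennreal (1 / ((real p + 1) * (real p + 2)))" using L_outer1[of p] by (simp add: ac_simps)
  finally show ?thesis .
qed

lemma J3: "(\<integral>\<^sup>+z. ennreal (snd z ^ p) * indicator T1 z \<partial>lborel) = ennreal (1 / ((real p + 1) * (real p + 2)))"
proof -
  have "(\<integral>\<^sup>+z. ennreal (snd z ^ p) * indicator T1 z \<partial>lborel)
      = (\<integral>\<^sup>+a. \<integral>\<^sup>+b. ennreal (b ^ p) * indicator T1 (a,b) \<partial>lborel \<partial>lborel)"
    by (subst lborel_fubini) (auto intro!: meas_ci continuous_intros)
  also have "\<dots> = (\<integral>\<^sup>+a. ennreal (a ^ (p+1) / (p+1)) * indicator {0..1} a \<partial>lborel)"
  proof (rule nn_integral_cong)
    fix a :: real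
    have "(\<integral>\<^sup>+b. ennreal (b ^ p) * indicator T1 (a,b) \<partial>lborel)
       = (\<integral>\<^sup>+b. (ennreal (b ^ p) * indicator {0..a} b) * indicator {0..1} a \<partial>lborel)"
      by (rule nn_integral_cong) (simp add: ind_T1_a mult_ac)
    also have "\<dots> = (\<integral>\<^sup>+b. ennreal (b ^ p) * indicator {0..a} b \<partial>lborel) * indicator {0..1} a"
      by (rule nn_integral_multc) simp
    also have "\<dots> = ennreal (a ^ (p+1) / (p+1)) * indicator {0..1} a"
      by (cases "a \<in> {0..1}") (auto simp: L_pow_right)
    finally show "(\<integral>\<^sup>+b. ennreal (b ^ p) * indicator T1 (a,b) \<partial>lborel) = ennreal (a ^ (p+1) / (p+1)) * indicator {0..1} a" .
  qed
  also have "\<dots> = ennreal (1 / ((real p + 1) * (real p + 2)))" using L_outer1[of p] by (simp add: ac_simps)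
  finally show ?thesis .
qed

lemma J1: "(\<integral>\<^sup>+z. ennreal ((1 - fst z) ^ p) * indicator T1 z \<partial>lborel) = ennreal (1 / ((real p + 1) * (real p + 2)))"
proof -
  have "(\<integral>\<^sup>+z. ennreal ((1 - fst z) ^ p) * indicator T1 z \<partial>lborel)
      = (\<integral>\<^sup>+b. \<integral>\<^sup>+a. ennreal ((1 - a) ^ p) * indicator T1 (a,b) \<partial>lborel \<partial>lborel)"
    by (subst lborel_fubini2) (auto intro!: meas_ci continuous_intros)
  also have "\<dots> = (\<integral>\<^sup>+b. ennreal ((1 - b) ^ (p+1) / (p+1)) * indicator {0..1} b \<partial>lborel)"
  proof (rule nn_integral_cong)
    fix b :: real
    have "(\<integral>\<^sup>+a. ennreal ((1 - a) ^ p) * indicator T1 (a,b) \<partial>lborel)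
       = (\<integral>\<^sup>+a. (ennreal ((1 - a) ^ p) * indicator {b..1} a) * indicator {0..1} b \<partial>lborel)"
      by (rule nn_integral_cong) (simp add: ind_T1_b mult_ac)
    also have "\<dots> = (\<integral>\<^sup>+a. ennreal ((1 - a) ^ p) * indicator {b..1} a \<partial>lborel) * indicator {0..1} b"
      by (rule nn_integral_multc) simp
    also have "\<dots> = ennreal ((1 - b) ^ (p+1) / (p+1)) * indicator {0..1} b"
      by (cases "b \<in> {0..1}") (auto simp: L_pow_one)
    finally show "(\<integral>\<^sup>+a. ennreal ((1 - a) ^ p) * indicator T1 (a,b) \<partial>lborel) = ennreal ((1 - b) ^ (p+1) / (p+1)) * indicator {0..1} b" .
  qed
  also have "\<dots> = ennreal (1 / ((real p + 1) * (real p + 2)))" using L_outer2[of p] by (simp add: ac_simps)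
  finally show ?thesis .
qed

lemma J4: "(\<integral>\<^sup>+z. ennreal ((snd z - fst z) ^ p) * indicator T2 z \<partial>lborel) = ennreal (1 / ((real p + 1) * (real p + 2)))"
proof -
  have "(\<integral>\<^sup>+z. ennreal ((snd z - fst z) ^ p) * indicator T2 z \<partial>lborel)
      = (\<integral>\<^sup>+b. \<integral>\<^sup>+a. ennreal ((b - a) ^ p) * indicator T2 (a,b) \<partial>lborel \<partial>lborel)"
    by (subst lborel_fubini2) (auto intro!: meas_ci continuous_intros)
  also have "\<dots> = (\<integral>\<^sup>+b. ennreal (b ^ (p+1) / (p+1)) * indicator {0..1} b \<partial>lborel)"
  proof (rule nn_integral_cong)
    fix b :: real
    have "(\<integral>\<^sup>+a. ennreal ((b - a) ^ p) * indicator T2 (a,b) \<partial>lborel)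
       = (\<integral>\<^sup>+a. (ennreal ((b - a) ^ p) * indicator {0..b} a) * indicator {0..1} b \<partial>lborel)"
      by (rule nn_integral_cong) (simp add: ind_T2_b mult_ac)
    also have "\<dots> = (\<integral>\<^sup>+a. ennreal ((b - a) ^ p) * indicator {0..b} a \<partial>lborel) * indicator {0..1} b"
      by (rule nn_integral_multc) simp
    also have "\<dots> = ennreal (b ^ (p+1) / (p+1)) * indicator {0..1} b"
      by (cases "b \<in> {0..1}") (auto simp: L_pow_left)
    finally show "(\<integral>\<^sup>+a. ennreal ((b - a) ^ p) * indicator T2 (a,b) \<partial>lborel) = ennreal (b ^ (p+1) / (p+1)) * indicator {0..1} b" .
  qed
  also have "\<dots> = ennreal (1 / ((real p + 1) * (real p + 2)))" using L_outer1[of p] by (simp add: ac_simps)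
  finally show ?thesis .
qed


definition cellc :: "int \<times> int \<Rightarrow> (real \<times> real) set" where
  "cellc c = {x. of_int (fst c) \<le> fst x \<and> fst x \<le> of_int (fst c) + 1 \<and> of_int (snd c) \<le> snd x \<and> snd x \<le> of_int (snd c) + 1}"

lemma cellc_cbox: "cellc (i,j) = cbox (of_int i, of_int j) (of_int i + 1, of_int j + 1)"
  by (auto simp: cellc_def cbox_Pair_eq)

lemma cellc_closed: "closed (cellc c)"
  using cellc_cbox[of "fst c" "snd c"] by (simp add: closed_cbox)

lemma cellc_borel[measurable]: "cellc c \<in> sets borel"
  using cellc_closed by simp

lemma emeasure_cellc: "emeasure lborel (cellc c) = 1"
proof -
  obtain i j where c: "c = (i,j)" by (cases c)
  show ?thesis unfolding c cellc_cbox
    by (simp add: emeasure_lborel_cbox_eq Basis_prod_def inner_prod_def)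
qed

lemma pow_superadd:
  fixes x y :: real assumes "0 \<le> x" "0 \<le> y" "p \<ge> 1"
  shows "x ^ p + y ^ p \<le> (x + y) ^ p"
proof -
  obtain q where q: "p = Suc q" using assms(3) by (cases p) auto
  have "x ^ q * x \<le> (x + y) ^ q * x"
    by (rule mult_right_mono[OF power_mono]) (use assms in auto)
  moreover have "y ^ q * y \<le> (x + y) ^ q * y"
    by (rule mult_right_mono[OF power_mono]) (use assms in auto)
  ultimately have "x ^ q * x + y ^ q * y \<le> (x + y) ^ q * (x + y)"
    by (simp add: distrib_left)
  then show ?thesis by (simp add: q mult.commute)
qed

lemma V_cell_le:
  assumes U: "\<And>z. U z \<ge> 0" and x: "x \<in> cellc (i,j)"
  shows "Vf U (fst x) (snd x) ^ p \<le> U (i,j) ^ p + U (i+1,j) ^ p + U (i,j+1) ^ p + U (i+1,j+1) ^ p"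
proof -
  define a where "a = fst x - of_int i"
  define b where "b = snd x - of_int j"
  have ab: "0 \<le> a" "a \<le> 1" "0 \<le> b" "b \<le> 1" using x by (auto simp: cellc_def a_def b_def)
  have fx: "fst x = of_int i + a" "snd x = of_int j + b" by (simp_all add: a_def b_def)
  define M where "M = max (max (U (i,j)) (U (i+1,j))) (max (U (i,j+1)) (U (i+1,j+1)))"
  have M: "U (i,j) \<le> M" "U (i+1,j) \<le> M" "U (i,j+1) \<le> M" "U (i+1,j+1) \<le> M" by (auto simp: M_def)
  have V0: "0 \<le> Vf U (fst x) (snd x)" by (rule Vf_nonneg[OF U])
  have VM: "Vf U (fst x) (snd x) \<le> M"
  proof (cases "b \<le> a")
    case True
    have "Vf U (fst x) (snd x) = U (i,j) * (1 - a) + U (i+1,j) * (a - b) + U (i+1,j+1) * b"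
      unfolding fx by (rule Vf_tri1) (use ab True in auto)
    also have "\<dots> \<le> M * (1 - a) + M * (a - b) + M * b"
      by (intro add_mono mult_right_mono M) (use ab True in auto)
    also have "\<dots> = M" by (simp add: algebra_simps)
    finally show ?thesis .
  next
    case False
    have "Vf U (fst x) (snd x) = U (i,j) * (1 - b) + U (i,j+1) * (b - a) + U (i+1,j+1) * a"
      unfolding fx by (rule Vf_tri2) (use ab False in auto)
    also have "\<dots> \<le> M * (1 - b) + M * (b - a) + M * a"
      by (intro add_mono mult_right_mono M) (use ab False in auto)
    also have "\<dots> = M" by (simp add: algebra_simps)
    finally show ?thesis .
  qed
  have "Vf U (fst x) (snd x) ^ p \<le> M ^ p" by (rule power_mono[OF VM V0])
  also have "M ^ p \<le> U (i,j) ^ p + U (i+1,j) ^ p + U (i,j+1) ^ p + U (i+1,j+1) ^ p"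
    using U[of "(i,j)"] U[of "(i+1,j)"] U[of "(i,j+1)"] U[of "(i+1,j+1)"]
    unfolding M_def by (auto simp: max_def)
  finally show ?thesis .
qed

lemma measurable_V[measurable]: "(\<lambda>x. Vf U (fst x) (snd x)) \<in> borel_measurable borel"
  by (rule borel_measurable_continuous_onI[OF continuous_Vf])

lemma cell_upper:
  assumes U: "\<And>z. U z \<ge> 0"
  shows "(\<integral>\<^sup>+x. ennreal (Vf U (fst x) (snd x) ^ p) * indicator (cellc (i,j)) x \<partial>lborel)
     \<le> ennreal (U (i,j) ^ p + U (i+1,j) ^ p + U (i,j+1) ^ p + U (i+1,j+1) ^ p)"
proof -
  let ?M = "U (i,j) ^ p + U (i+1,j) ^ p + U (i,j+1) ^ p + U (i+1,j+1) ^ p"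
  have "(\<integral>\<^sup>+x. ennreal (Vf U (fst x) (snd x) ^ p) * indicator (cellc (i,j)) x \<partial>lborel)
     \<le> (\<integral>\<^sup>+x. ennreal ?M * indicator (cellc (i,j)) x \<partial>lborel)"
    by (intro nn_integral_mono) (auto split: split_indicator intro!: ennreal_leI V_cell_le[OF U])
  also have "\<dots> = ennreal ?M * emeasure lborel (cellc (i,j))"
    by (simp add: nn_integral_cmult_indicator)
  also have "\<dots> = ennreal ?M" by (simp add: emeasure_cellc)
  finally show ?thesis .
qed


lemma phi_lb1: "0 \<le> b \<Longrightarrow> b \<le> a \<Longrightarrow> a \<le> 1 \<Longrightarrow> phi a b = 1 - a" by (rule phi_tri1(1))

lemma pow4:
  fixes A B C D :: real assumes "0 \<le> A" "0 \<le> B" "0 \<le> C" "0 \<le> D" "p \<ge> 1"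
  shows "A ^ p + B ^ p + C ^ p + D ^ p \<le> (A + B + C + D) ^ p"
proof -
  have "A ^ p + B ^ p \<le> (A + B) ^ p" by (rule pow_superadd) (use assms in auto)
  moreover have "(A + B) ^ p + C ^ p \<le> (A + B + C) ^ p" by (rule pow_superadd) (use assms in auto)
  moreover have "(A + B + C) ^ p + D ^ p \<le> (A + B + C + D) ^ p" by (rule pow_superadd) (use assms in auto)
  ultimately show ?thesis by linarith
qed

lemma term_lb:
  fixes u f l ind :: real
  assumes "0 \<le> u" "0 \<le> f" "ind = 0 \<or> (ind = 1 \<and> f = l)"
  shows "u ^ p * (ind * l ^ p) \<le> (u * f) ^ p"
  using assms by (auto simp: power_mult_distrib)

lemma V_cell_ge:
  assumes U: "\<And>z. U z \<ge> 0" and p: "p \<ge> 1" and y: "y \<in> cellc (0,0)"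
  shows "U (i,j) ^ p * (indicator T1 y * (1 - fst y) ^ p) + U (i+1,j) ^ p * (indicator T1 y * (fst y - snd y) ^ p)
     + U (i+1,j+1) ^ p * (indicator T1 y * snd y ^ p) + U (i,j+1) ^ p * (indicator T2 y * (snd y - fst y) ^ p)
     \<le> Vf U (of_int i + fst y) (of_int j + snd y) ^ p"
proof -
  define a where "a = fst y"
  define b where "b = snd y"
  have ab: "0 \<le> a" "a \<le> 1" "0 \<le> b" "b \<le> 1" using y by (auto simp: cellc_def a_def b_def)
  have V: "Vf U (of_int i + a) (of_int j + b) = U (i,j) * phi a b + U (i+1,j) * phi (a - 1) b
     + U (i,j+1) * phi a (b - 1) + U (i+1,j+1) * phi (a - 1) (b - 1)"
    by (rule Vf_cell) (use ab in auto)
  have i1: "indicator T1 y = (0::real) \<or> (indicator T1 y = (1::real) \<and> 0 \<le> b \<and> b \<le> a \<and> a \<le> 1)"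
    by (auto simp: T1_def a_def b_def split: split_indicator)
  have i2: "indicator T2 y = (0::real) \<or> (indicator T2 y = (1::real) \<and> 0 \<le> a \<and> a \<le> b \<and> b \<le> 1)"
    by (auto simp: T2_def a_def b_def split: split_indicator)
  have t1: "U (i,j) ^ p * (indicator T1 y * (1 - a) ^ p) \<le> (U (i,j) * phi a b) ^ p"
    by (rule term_lb) (use U i1 phi_tri1 phi_nonneg in auto)
  have t2: "U (i+1,j) ^ p * (indicator T1 y * (a - b) ^ p) \<le> (U (i+1,j) * phi (a - 1) b) ^ p"
    by (rule term_lb) (use U i1 phi_tri1 phi_nonneg in auto)
  have t3: "U (i+1,j+1) ^ p * (indicator T1 y * b ^ p) \<le> (U (i+1,j+1) * phi (a - 1) (b - 1)) ^ p"
    by (rule term_lb) (use U i1 phi_tri1 phi_nonneg in auto)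
  have t4: "U (i,j+1) ^ p * (indicator T2 y * (b - a) ^ p) \<le> (U (i,j+1) * phi a (b - 1)) ^ p"
    by (rule term_lb) (use U i2 phi_tri2 phi_nonneg in auto)
  have s: "(U (i,j) * phi a b) ^ p + (U (i+1,j) * phi (a - 1) b) ^ p + (U (i,j+1) * phi a (b - 1)) ^ p
      + (U (i+1,j+1) * phi (a - 1) (b - 1)) ^ p \<le> Vf U (of_int i + a) (of_int j + b) ^ p"
    unfolding V by (rule pow4) (use U phi_nonneg p in auto)
  show ?thesis using t1 t2 t3 t4 s unfolding a_def b_def by linarith
qed

lemma meas_fst[measurable]: "(\<lambda>y::real\<times>real. fst y) \<in> borel_measurable borel"
  by (rule borel_measurable_continuous_onI) (intro continuous_intros)
lemma meas_snd[measurable]: "(\<lambda>y::real\<times>real. snd y) \<in> borel_measurable borel"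
  by (rule borel_measurable_continuous_onI) (intro continuous_intros)

lemma int_term:
  fixes l :: "real \<times> real \<Rightarrow> real" and u :: real
  assumes [measurable]: "l \<in> borel_measurable borel" and "u \<ge> 0"
    and J: "(\<integral>\<^sup>+z. ennreal (l z ^ p) * indicator T z \<partial>lborel) = ennreal k"
    and [measurable]: "T \<in> sets borel"
  shows "(\<integral>\<^sup>+y. ennreal (u ^ p * (indicator T y * l y ^ p)) \<partial>lborel) = ennreal (u ^ p * k)"
proof -
  have "(\<integral>\<^sup>+y. ennreal (u ^ p * (indicator T y * l y ^ p)) \<partial>lborel)
      = (\<integral>\<^sup>+y. ennreal (u ^ p) * (ennreal (l y ^ p) * indicator T y) \<partial>lborel)"
    by (rule nn_integral_cong) (auto simp: ennreal_mult' assms split: split_indicator)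
  also have "\<dots> = ennreal (u ^ p) * (\<integral>\<^sup>+y. ennreal (l y ^ p) * indicator T y \<partial>lborel)"
    by (rule nn_integral_cmult) measurable
  also have "\<dots> = ennreal (u ^ p * k)"
    unfolding J using assms by (subst ennreal_mult') auto
  finally show ?thesis .
qed

lemma e_nonneg:
  "0 \<le> indicator T1 y * (1 - fst y) ^ p" "0 \<le> indicator T1 y * (fst y - snd y) ^ p"
  "0 \<le> indicator T1 y * snd y ^ p" "0 \<le> indicator T2 y * (snd y - fst y) ^ p"
  by (auto simp: T1_def T2_def split: split_indicator)

lemma cell_lower:
  assumes U: "\<And>z. U z \<ge> 0" and p: "p \<ge> 1"
  shows "ennreal ((U (i,j) ^ p + U (i+1,j) ^ p + U (i,j+1) ^ p + U (i+1,j+1) ^ p) / ((real p + 1) * (real p + 2)))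
     \<le> (\<integral>\<^sup>+x. ennreal (Vf U (fst x) (snd x) ^ p) * indicator (cellc (i,j)) x \<partial>lborel)"
proof -
  define k where "k = 1 / ((real p + 1) * (real p + 2))"
  define c :: "real \<times> real" where "c = (of_int i, of_int j)"
  define R where "R y = U (i,j) ^ p * (indicator T1 y * (1 - fst y) ^ p) + U (i+1,j) ^ p * (indicator T1 y * (fst y - snd y) ^ p)
     + U (i+1,j+1) ^ p * (indicator T1 y * snd y ^ p) + U (i,j+1) ^ p * (indicator T2 y * (snd y - fst y) ^ p)" for y
  have Rnn: "0 \<le> U (i,j) ^ p * (indicator T1 y * (1 - fst y) ^ p)" "0 \<le> U (i+1,j) ^ p * (indicator T1 y * (fst y - snd y) ^ p)"
    "0 \<le> U (i+1,j+1) ^ p * (indicator T1 y * snd y ^ p)" "0 \<le> U (i,j+1) ^ p * (indicator T2 y * (snd y - fst y) ^ p)" for y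
    using e_nonneg[of y p] U by (auto intro!: mult_nonneg_nonneg)
  have "(\<integral>\<^sup>+y. ennreal (R y) \<partial>lborel) =
      (\<integral>\<^sup>+y. ennreal (U (i,j) ^ p * (indicator T1 y * (1 - fst y) ^ p)) + ennreal (U (i+1,j) ^ p * (indicator T1 y * (fst y - snd y) ^ p))
     + ennreal (U (i+1,j+1) ^ p * (indicator T1 y * snd y ^ p)) + ennreal (U (i,j+1) ^ p * (indicator T2 y * (snd y - fst y) ^ p)) \<partial>lborel)"
    by (rule nn_integral_cong) (simp add: R_def Rnn add_nonneg_nonneg del: ennreal_plus add: ennreal_plus[symmetric])
  also have "\<dots> = (\<integral>\<^sup>+y. ennreal (U (i,j) ^ p * (indicator T1 y * (1 - fst y) ^ p)) \<partial>lborel)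
     + (\<integral>\<^sup>+y. ennreal (U (i+1,j) ^ p * (indicator T1 y * (fst y - snd y) ^ p)) \<partial>lborel)
     + (\<integral>\<^sup>+y. ennreal (U (i+1,j+1) ^ p * (indicator T1 y * snd y ^ p)) \<partial>lborel)
     + (\<integral>\<^sup>+y. ennreal (U (i,j+1) ^ p * (indicator T2 y * (snd y - fst y) ^ p)) \<partial>lborel)"
    by (simp add: nn_integral_add)
  also have "\<dots> = ennreal (U (i,j) ^ p * k) + ennreal (U (i+1,j) ^ p * k) + ennreal (U (i+1,j+1) ^ p * k) + ennreal (U (i,j+1) ^ p * k)"
    using int_term[OF _ _ J1, where u="U (i,j)"] int_term[OF _ _ J2, where u="U (i+1,j)"]
      int_term[OF _ _ J3, where u="U (i+1,j+1)"] int_term[OF _ _ J4, where u="U (i,j+1)"] U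
    by (simp add: k_def)
  also have "\<dots> = ennreal ((U (i,j) ^ p + U (i+1,j) ^ p + U (i,j+1) ^ p + U (i+1,j+1) ^ p) / ((real p + 1) * (real p + 2)))"
    using U by (simp add: k_def del: ennreal_plus add: ennreal_plus[symmetric] add_divide_distrib)
  finally have eqR: "(\<integral>\<^sup>+y. ennreal (R y) \<partial>lborel) = ennreal ((U (i,j) ^ p + U (i+1,j) ^ p + U (i,j+1) ^ p + U (i+1,j+1) ^ p) / ((real p + 1) * (real p + 2)))" .
  have "(\<integral>\<^sup>+y. ennreal (R y) \<partial>lborel) \<le> (\<integral>\<^sup>+y. ennreal (Vf U (fst (c + y)) (snd (c + y)) ^ p) * indicator (cellc (i,j)) (c + y) \<partial>lborel)"
  proof (rule nn_integral_mono)
    fix y :: "real \<times> real"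
    show "ennreal (R y) \<le> ennreal (Vf U (fst (c + y)) (snd (c + y)) ^ p) * indicator (cellc (i,j)) (c + y)"
    proof (cases "y \<in> cellc (0,0)")
      case True
      then have "c + y \<in> cellc (i,j)" by (auto simp: cellc_def c_def)
      moreover have "R y \<le> Vf U (fst (c + y)) (snd (c + y)) ^ p"
        using V_cell_ge[OF U p True, where i=i and j=j] by (simp add: R_def c_def)
      ultimately show ?thesis by (simp add: ennreal_leI)
    next
      case False
      then have "y \<notin> T1" "y \<notin> T2" by (auto simp: cellc_def T1_def T2_def)
      then show ?thesis by (simp add: R_def)
    qed
  qed
  also have "\<dots> = (\<integral>\<^sup>+x. ennreal (Vf U (fst x) (snd x) ^ p) * indicator (cellc (i,j)) x \<partial>lborel)"
    by (rule shift_integral[symmetric]) measurable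
  finally show ?thesis using eqR by simp
qed


definition Lset :: "(real \<times> real) set" where
  "Lset = {z. \<exists>k::int. fst z = of_int k \<or> snd z = of_int k \<or> fst z - snd z = of_int k}"

lemma null_hyper: "(a::real\<times>real) \<noteq> 0 \<Longrightarrow> {x. a \<bullet> x = b} \<in> null_sets lborel"
proof -
  assume a: "a \<noteq> 0"
  have "negligible {x. a \<bullet> x = b}" using negligible_hyperplane a by blast
  then have "{x. a \<bullet> x = b} \<in> null_sets lebesgue" by (simp add: negligible_iff_null_sets)
  moreover have "{x. a \<bullet> x = b} \<in> sets lborel" using closed_hyperplane[of a b] by simp
  ultimately show ?thesis using null_sets_completion_iff by blast
qed

lemma AE_hyper: "(a::real\<times>real) \<noteq> 0 \<Longrightarrow> AE x in lborel. a \<bullet> x \<noteq> b"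
  using AE_not_in[OF null_hyper, of a b] by simp

lemma AE_Lset:
  assumes h: "h1 \<noteq> 0" "h2 \<noteq> 0"
  shows "AE x in lborel. (fst x / h1, snd x / h2) \<notin> Lset"
proof -
  have "AE x in lborel. \<forall>k::int. fst x / h1 \<noteq> of_int k \<and> snd x / h2 \<noteq> of_int k \<and> fst x / h1 - snd x / h2 \<noteq> of_int k"
  proof (subst AE_all_countable, intro allI)
    fix k :: int
    have nz1: "(1 / h1, 0) \<noteq> (0::real\<times>real)" using h by (simp add: zero_prod_def)
    have 1: "AE x::real\<times>real in lborel. (1 / h1, 0) \<bullet> x \<noteq> of_int k" by (rule AE_hyper[OF nz1])
    have nz2: "(0, 1 / h2) \<noteq> (0::real\<times>real)" using h by (simp add: zero_prod_def)
    have 2: "AE x::real\<times>real in lborel. (0, 1 / h2) \<bullet> x \<noteq> of_int k" by (rule AE_hyper[OF nz2])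
    have nz3: "(1 / h1, - 1 / h2) \<noteq> (0::real\<times>real)" using h by (simp add: zero_prod_def)
    have 3: "AE x::real\<times>real in lborel. (1 / h1, - 1 / h2) \<bullet> x \<noteq> of_int k" by (rule AE_hyper[OF nz3])
    show "AE x in lborel. fst x / h1 \<noteq> of_int k \<and> snd x / h2 \<noteq> of_int k \<and> fst x / h1 - snd x / h2 \<noteq> of_int k"
      using 1 2 3 by eventually_elim (auto simp: inner_prod_def)
  qed
  then show ?thesis by eventually_elim (auto simp: Lset_def)
qed

definition gs :: "(int \<times> int \<Rightarrow> real) \<Rightarrow> real \<Rightarrow> real \<Rightarrow> real \<times> real \<Rightarrow> real \<times> real" where
  "gs U h1 h2 z = (if z \<in> Lset then (0,0)
     else if snd z - of_int \<lfloor>snd z\<rfloor> < fst z - of_int \<lfloor>fst z\<rfloor>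
     then ((U (\<lfloor>fst z\<rfloor>+1,\<lfloor>snd z\<rfloor>) - U (\<lfloor>fst z\<rfloor>,\<lfloor>snd z\<rfloor>)) / h1, (U (\<lfloor>fst z\<rfloor>+1,\<lfloor>snd z\<rfloor>+1) - U (\<lfloor>fst z\<rfloor>+1,\<lfloor>snd z\<rfloor>)) / h2)
     else ((U (\<lfloor>fst z\<rfloor>+1,\<lfloor>snd z\<rfloor>+1) - U (\<lfloor>fst z\<rfloor>,\<lfloor>snd z\<rfloor>+1)) / h1, (U (\<lfloor>fst z\<rfloor>,\<lfloor>snd z\<rfloor>+1) - U (\<lfloor>fst z\<rfloor>,\<lfloor>snd z\<rfloor>)) / h2))"

lemma gderiv:
  assumes h: "h1 > 0" "h2 > 0" and x: "(fst x / h1, snd x / h2) \<notin> Lset"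
  shows "((\<lambda>y. Vf U (fst y / h1) (snd y / h2)) has_derivative (\<lambda>k. gs U h1 h2 (fst x / h1, snd x / h2) \<bullet> k)) (at x)"
proof -
  define s where "s = fst x / h1"
  define t where "t = snd x / h2"
  define i where "i = \<lfloor>s\<rfloor>"
  define j where "j = \<lfloor>t\<rfloor>"
  have nL: "(s,t) \<notin> Lset" using x by (simp add: s_def t_def)
  have nk: "\<not> (\<exists>k::int. s = of_int k \<or> t = of_int k \<or> s - t = of_int k)"
    using nL unfolding Lset_def by simp
  have si: "s \<noteq> of_int i" "t \<noteq> of_int j" "s - t \<noteq> of_int (i - j)"
    using nk by blast+
  have a: "of_int i < s" "s < of_int i + 1" using si unfolding i_def by linarith+
  have b: "of_int j < t" "t < of_int j + 1" using si unfolding j_def by linarith+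
  have ab: "t - of_int j \<noteq> s - of_int i" using si(3) by simp
  let ?c = "\<lambda>y. fst y / h1" and ?d = "\<lambda>y. snd y / h2"
  show ?thesis
  proof (cases "t - of_int j < s - of_int i")
    case True
    let ?O = "{y. of_int i < ?c y \<and> ?c y < of_int i + 1 \<and> of_int j < ?d y \<and> ?d y < of_int j + 1 \<and> ?d y - of_int j < ?c y - of_int i}"
    let ?g = "\<lambda>y. U (i,j) * (1 - (?c y - of_int i)) + U (i+1,j) * ((?c y - of_int i) - (?d y - of_int j)) + U (i+1,j+1) * (?d y - of_int j)"
    have O: "open ?O"
      by (intro open_Collect_conj open_Collect_less continuous_intros) (use h in auto)
    have xO: "x \<in> ?O" using a b True by (simp add: s_def t_def)
    have eq: "?g y = Vf U (fst y / h1) (snd y / h2)" if "y \<in> ?O" for y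
    proof -
      have "Vf U (of_int i + (?c y - of_int i)) (of_int j + (?d y - of_int j)) = ?g y"
        by (rule Vf_tri1) (use that in auto)
      then show ?thesis by simp
    qed
    have gs: "gs U h1 h2 (s, t) = ((U (i+1,j) - U (i,j)) / h1, (U (i+1,j+1) - U (i+1,j)) / h2)"
      using nL True by (simp add: gs_def i_def j_def)
    have "(?g has_derivative (\<lambda>k. gs U h1 h2 (s, t) \<bullet> k)) (at x)"
      unfolding gs
      using h by (auto intro!: derivative_eq_intros ext simp: inner_prod_def algebra_simps diff_divide_distrib)
    then have "((\<lambda>y. Vf U (fst y / h1) (snd y / h2)) has_derivative (\<lambda>k. gs U h1 h2 (s, t) \<bullet> k)) (at x)"
      by (rule has_derivative_transform_within_open[OF _ O xO eq])
    then show ?thesis by (simp add: s_def t_def)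
  next
    case False
    then have F: "s - of_int i < t - of_int j" using ab by linarith
    let ?O = "{y. of_int i < ?c y \<and> ?c y < of_int i + 1 \<and> of_int j < ?d y \<and> ?d y < of_int j + 1 \<and> ?c y - of_int i < ?d y - of_int j}"
    let ?g = "\<lambda>y. U (i,j) * (1 - (?d y - of_int j)) + U (i,j+1) * ((?d y - of_int j) - (?c y - of_int i)) + U (i+1,j+1) * (?c y - of_int i)"
    have O: "open ?O"
      by (intro open_Collect_conj open_Collect_less continuous_intros) (use h in auto)
    have xO: "x \<in> ?O" using a b F by (simp add: s_def t_def)
    have eq: "?g y = Vf U (fst y / h1) (snd y / h2)" if "y \<in> ?O" for y
    proof -
      have "Vf U (of_int i + (?c y - of_int i)) (of_int j + (?d y - of_int j)) = ?g y"
        by (rule Vf_tri2) (use that in auto)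
      then show ?thesis by simp
    qed
    have gs: "gs U h1 h2 (s, t) = ((U (i+1,j+1) - U (i,j+1)) / h1, (U (i,j+1) - U (i,j)) / h2)"
      using nL False by (simp add: gs_def i_def j_def)
    have "(?g has_derivative (\<lambda>k. gs U h1 h2 (s, t) \<bullet> k)) (at x)"
      unfolding gs
      using h by (auto intro!: derivative_eq_intros ext simp: inner_prod_def algebra_simps diff_divide_distrib)
    then have "((\<lambda>y. Vf U (fst y / h1) (snd y / h2)) has_derivative (\<lambda>k. gs U h1 h2 (s, t) \<bullet> k)) (at x)"
      by (rule has_derivative_transform_within_open[OF _ O xO eq])
    then show ?thesis by (simp add: s_def t_def)
  qed
qed


lemma cs_le:
  assumes "\<And>c. c \<in> A \<Longrightarrow> c \<noteq> c0 \<Longrightarrow> f c = 0"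
  shows "(\<integral>\<^sup>+c. f c \<partial>count_space A) = (if c0 \<in> A then f c0 else 0)"
proof (cases "c0 \<in> A")
  case True
  then show ?thesis using nn_integral_count_space'[of "{c0}" A f] assms by auto
next
  case False
  then show ?thesis using nn_integral_count_space'[of "{}" A f] assms by auto
qed

lemma cs_mono_set:
  "A \<subseteq> B \<Longrightarrow> (\<integral>\<^sup>+c. f c \<partial>count_space A) \<le> (\<integral>\<^sup>+c. f c \<partial>count_space B)"
  by (simp add: nn_integral_count_space_indicator nn_integral_mono split: split_indicator)
     (auto intro!: nn_integral_mono split: split_indicator)

lemma cs_shift:
  fixes k :: "int \<times> int"
  shows "(\<integral>\<^sup>+c. g (c + k) \<partial>count_space A) = (\<integral>\<^sup>+z. g z \<partial>count_space ((\<lambda>c. c + k) ` A))"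
  by (rule nn_integral_bij_count_space) (auto simp: bij_betw_def inj_on_def)

definition K4 :: "(int \<times> int) set" where "K4 = {(0,0),(1,0),(0,1),(1,1)}"

lemma sum_K4: "(\<Sum>k\<in>K4. f ((i,j) + k)) = f (i,j) + f (i+1,j) + f (i,j+1) + (f (i+1,j+1) :: ennreal)"
  by (simp add: K4_def add_ac)

lemma countable_int2[simp]: "countable (A :: (int \<times> int) set)"
  by (rule countable_subset[OF subset_UNIV]) simp

lemma upper_total:
  assumes U: "\<And>z. U z \<ge> 0"
    and cov: "\<And>z. z \<in> Om \<Longrightarrow> \<exists>c\<in>CC. z \<in> cellc c"
    and sh: "\<And>c k. c \<in> CC \<Longrightarrow> k \<in> K4 \<Longrightarrow> c + k \<in> GG"
  shows "(\<integral>\<^sup>+z. ennreal (Vf U (fst z) (snd z) ^ p) * indicator Om z \<partial>lborel)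
     \<le> 4 * (\<integral>\<^sup>+y. ennreal (U y ^ p) \<partial>count_space GG)"
proof -
  let ?V = "\<lambda>z. Vf U (fst z) (snd z)"
  have "(\<integral>\<^sup>+z. ennreal (?V z ^ p) * indicator Om z \<partial>lborel)
      \<le> (\<integral>\<^sup>+z. \<integral>\<^sup>+c. ennreal (?V z ^ p) * indicator (cellc c) z \<partial>count_space CC \<partial>lborel)"
  proof (rule nn_integral_mono)
    fix z
    show "ennreal (?V z ^ p) * indicator Om z \<le> (\<integral>\<^sup>+c. ennreal (?V z ^ p) * indicator (cellc c) z \<partial>count_space CC)"
    proof (cases "z \<in> Om")
      case True
      then obtain c where c: "c \<in> CC" "z \<in> cellc c" using cov by blast
      have "ennreal (?V z ^ p) * indicator Om z = ennreal (?V z ^ p) * indicator (cellc c) z"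
        using True c by simp
      also have "\<dots> \<le> (\<integral>\<^sup>+c. ennreal (?V z ^ p) * indicator (cellc c) z \<partial>count_space CC)"
        by (rule nn_integral_ge_point[OF c(1)])
      finally show ?thesis .
    qed simp
  qed
  also have "\<dots> = (\<integral>\<^sup>+c. \<integral>\<^sup>+z. ennreal (?V z ^ p) * indicator (cellc c) z \<partial>lborel \<partial>count_space CC)"
    by (rule nn_integral_count_space_nn_integral) auto
  also have "\<dots> \<le> (\<integral>\<^sup>+c. (\<Sum>k\<in>K4. ennreal (U (c + k) ^ p)) \<partial>count_space CC)"
  proof (rule nn_integral_mono)
    fix c :: "int \<times> int"
    obtain i j where c: "c = (i,j)" by (cases c)
    show "(\<integral>\<^sup>+z. ennreal (?V z ^ p) * indicator (cellc c) z \<partial>lborel) \<le> (\<Sum>k\<in>K4. ennreal (U (c + k) ^ p))"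
      unfolding c sum_K4[of "\<lambda>z. ennreal (U z ^ p)"] using cell_upper[OF U, where p=p and i=i and j=j] U
      by (simp add: zero_le_power)
  qed
  also have "\<dots> = (\<Sum>k\<in>K4. \<integral>\<^sup>+c. ennreal (U (c + k) ^ p) \<partial>count_space CC)"
    by (rule nn_integral_sum) simp
  also have "\<dots> \<le> (\<Sum>k\<in>K4. \<integral>\<^sup>+y. ennreal (U y ^ p) \<partial>count_space GG)"
  proof (rule sum_mono)
    fix k assume k: "k \<in> K4"
    have "(\<integral>\<^sup>+c. ennreal (U (c + k) ^ p) \<partial>count_space CC) = (\<integral>\<^sup>+y. ennreal (U y ^ p) \<partial>count_space ((\<lambda>c. c + k) ` CC))"
      by (rule cs_shift)
    also have "\<dots> \<le> (\<integral>\<^sup>+y. ennreal (U y ^ p) \<partial>count_space GG)"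
      by (rule cs_mono_set) (use sh k in blast)
    finally show "(\<integral>\<^sup>+c. ennreal (U (c + k) ^ p) \<partial>count_space CC) \<le> (\<integral>\<^sup>+y. ennreal (U y ^ p) \<partial>count_space GG)" .
  qed
  also have "\<dots> = 4 * (\<integral>\<^sup>+y. ennreal (U y ^ p) \<partial>count_space GG)"
    by (simp add: K4_def)
  finally show ?thesis .
qed


lemma cell_uniq:
  assumes "z \<in> cellc c" "z \<notin> Lset"
  shows "c = (\<lfloor>fst z\<rfloor>, \<lfloor>snd z\<rfloor>)"
proof -
  obtain i j where c: "c = (i,j)" by (cases c)
  have nk: "\<not> (\<exists>k::int. fst z = of_int k \<or> snd z = of_int k \<or> fst z - snd z = of_int k)"
    using assms(2) unfolding Lset_def by simp
  have "fst z \<noteq> of_int i" "fst z \<noteq> of_int (i+1)" "snd z \<noteq> of_int j" "snd z \<noteq> of_int (j+1)"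
    using nk by blast+
  moreover have "of_int i \<le> fst z" "fst z \<le> of_int i + 1" "of_int j \<le> snd z" "snd z \<le> of_int j + 1"
    using assms(1) by (auto simp: cellc_def c)
  ultimately have "of_int i < fst z" "fst z < of_int i + 1" "of_int j < snd z" "snd z < of_int j + 1"
    by auto
  then have "\<lfloor>fst z\<rfloor> = i" "\<lfloor>snd z\<rfloor> = j" by linarith+
  then show ?thesis by (simp add: c)
qed

lemma lower_total:
  assumes U: "\<And>z. U z \<ge> 0" and p: "p \<ge> 1"
    and inner: "\<And>c z. c \<in> CC \<Longrightarrow> z \<in> cellc c \<Longrightarrow> z \<notin> Lset \<Longrightarrow> z \<in> Om"
    and cov2: "\<And>y. y \<in> GG \<Longrightarrow> \<exists>k\<in>K4. y - k \<in> CC"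
  shows "ennreal (1 / ((real p + 1) * (real p + 2))) * (\<integral>\<^sup>+y. ennreal (U y ^ p) \<partial>count_space GG)
     \<le> (\<integral>\<^sup>+z. ennreal (Vf U (fst z) (snd z) ^ p) * indicator Om z \<partial>lborel)"
proof -
  let ?V = "\<lambda>z. Vf U (fst z) (snd z)"
  let ?f = "\<lambda>y. ennreal (U y ^ p)"
  let ?q = "(real p + 1) * (real p + 2)"
  have q: "?q > 0" by simp
  have "(\<integral>\<^sup>+y. ?f y \<partial>count_space GG) = (\<integral>\<^sup>+y. ?f y * indicator GG y \<partial>count_space UNIV)"
    by (rule nn_integral_count_space_indicator) simp
  also have "\<dots> \<le> (\<integral>\<^sup>+y. (\<Sum>k\<in>K4. ?f y * indicator ((\<lambda>c. c + k) ` CC) y) \<partial>count_space UNIV)"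
  proof (rule nn_integral_mono)
    fix y
    show "?f y * indicator GG y \<le> (\<Sum>k\<in>K4. ?f y * indicator ((\<lambda>c. c + k) ` CC) y)"
    proof (cases "y \<in> GG")
      case True
      then obtain k where k: "k \<in> K4" "y - k \<in> CC" using cov2 by blast
      then have "y \<in> (\<lambda>c. c + k) ` CC" by (auto intro!: image_eqI[where x="y - k"])
      then have "?f y * indicator GG y = ?f y * indicator ((\<lambda>c. c + k) ` CC) y" using True by simp
      also have "\<dots> \<le> (\<Sum>k\<in>K4. ?f y * indicator ((\<lambda>c. c + k) ` CC) y)"
        by (rule member_le_sum[OF k(1)]) (auto simp: K4_def)
      finally show ?thesis .
    qed simp
  qed
  also have "\<dots> = (\<Sum>k\<in>K4. \<integral>\<^sup>+y. ?f y * indicator ((\<lambda>c. c + k) ` CC) y \<partial>count_space UNIV)"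
    by (rule nn_integral_sum) simp
  also have "\<dots> = (\<Sum>k\<in>K4. \<integral>\<^sup>+c. ?f (c + k) \<partial>count_space CC)"
  proof (rule sum.cong[OF refl])
    fix k :: "int \<times> int"
    show "(\<integral>\<^sup>+y. ?f y * indicator ((\<lambda>c. c + k) ` CC) y \<partial>count_space UNIV) = (\<integral>\<^sup>+c. ?f (c + k) \<partial>count_space CC)"
      by (subst cs_shift) (simp add: nn_integral_count_space_indicator)
  qed
  also have "\<dots> = (\<integral>\<^sup>+c. (\<Sum>k\<in>K4. ?f (c + k)) \<partial>count_space CC)"
    by (rule nn_integral_sum[symmetric]) simp
  finally have W: "(\<integral>\<^sup>+y. ?f y \<partial>count_space GG) \<le> (\<integral>\<^sup>+c. (\<Sum>k\<in>K4. ?f (c + k)) \<partial>count_space CC)" .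
  have "ennreal (1 / ?q) * (\<integral>\<^sup>+y. ?f y \<partial>count_space GG) \<le> ennreal (1 / ?q) * (\<integral>\<^sup>+c. (\<Sum>k\<in>K4. ?f (c + k)) \<partial>count_space CC)"
    by (rule mult_left_mono[OF W]) simp
  also have "\<dots> = (\<integral>\<^sup>+c. ennreal (1 / ?q) * (\<Sum>k\<in>K4. ?f (c + k)) \<partial>count_space CC)"
    by (rule nn_integral_cmult[symmetric]) simp
  also have "\<dots> \<le> (\<integral>\<^sup>+c. \<integral>\<^sup>+z. ennreal (?V z ^ p) * indicator (cellc c) z \<partial>lborel \<partial>count_space CC)"
  proof (rule nn_integral_mono)
    fix c :: "int \<times> int"
    obtain i j where c: "c = (i,j)" by (cases c)
    have e: "ennreal (1 / ?q) * (\<Sum>k\<in>K4. ?f (c + k)) = ennreal ((U (i,j) ^ p + U (i+1,j) ^ p + U (i,j+1) ^ p + U (i+1,j+1) ^ p) / ?q)"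
      unfolding c sum_K4[of "\<lambda>z. ennreal (U z ^ p)"] using U
      by (simp add: zero_le_power ennreal_mult''[symmetric] del: ennreal_plus add: ennreal_plus[symmetric])
    show "ennreal (1 / ?q) * (\<Sum>k\<in>K4. ?f (c + k)) \<le> (\<integral>\<^sup>+z. ennreal (?V z ^ p) * indicator (cellc c) z \<partial>lborel)"
      unfolding e unfolding c by (rule cell_lower[OF U p])
  qed
  also have "\<dots> = (\<integral>\<^sup>+z. \<integral>\<^sup>+c. ennreal (?V z ^ p) * indicator (cellc c) z \<partial>count_space CC \<partial>lborel)"
    by (rule nn_integral_count_space_nn_integral[symmetric]) auto
  also have "\<dots> \<le> (\<integral>\<^sup>+z. ennreal (?V z ^ p) * indicator Om z \<partial>lborel)"
  proof (rule nn_integral_mono_AE)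
    have "AE z in lborel. (fst z / 1, snd z / 1) \<notin> Lset" by (rule AE_Lset) simp_all
    then show "AE z in lborel. (\<integral>\<^sup>+c. ennreal (?V z ^ p) * indicator (cellc c) z \<partial>count_space CC) \<le> ennreal (?V z ^ p) * indicator Om z"
    proof eventually_elim
      case (elim z)
      then have zL: "z \<notin> Lset" by simp
      let ?c0 = "(\<lfloor>fst z\<rfloor>, \<lfloor>snd z\<rfloor>)"
      have "(\<integral>\<^sup>+c. ennreal (?V z ^ p) * indicator (cellc c) z \<partial>count_space CC)
         = (if ?c0 \<in> CC then ennreal (?V z ^ p) * indicator (cellc ?c0) z else 0)"
      proof (rule cs_le)
        fix c assume "c \<in> CC" "c \<noteq> ?c0"
        then show "ennreal (?V z ^ p) * indicator (cellc c) z = 0"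
          using cell_uniq[of z c] zL by (auto split: split_indicator)
      qed
      also have "\<dots> \<le> ennreal (?V z ^ p) * indicator Om z"
        using inner[of ?c0 z] zL by (auto split: split_indicator)
      finally show ?case .
    qed
  qed
  finally show ?thesis .
qed


definition X1 :: "(int \<times> int \<Rightarrow> real) \<Rightarrow> real \<Rightarrow> real \<Rightarrow> int \<times> int \<Rightarrow> real" where
  "X1 U h1 h2 c = ((U (fst c + 1, snd c) - U c) / h1)\<^sup>2 + ((U (fst c + 1, snd c + 1) - U (fst c + 1, snd c)) / h2)\<^sup>2"
definition X2 :: "(int \<times> int \<Rightarrow> real) \<Rightarrow> real \<Rightarrow> real \<Rightarrow> int \<times> int \<Rightarrow> real" where
  "X2 U h1 h2 c = ((U (fst c + 1, snd c + 1) - U (fst c, snd c + 1)) / h1)\<^sup>2 + ((U (fst c, snd c + 1) - U c) / h2)\<^sup>2"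

definition cr :: "int \<times> int \<Rightarrow> real \<times> real" where "cr c = (of_int (fst c), of_int (snd c))"

lemma gs_point:
  assumes z: "z \<notin> Lset"
  shows "ennreal ((norm (gs U h1 h2 z))\<^sup>2) \<le> ennreal (X1 U h1 h2 (\<lfloor>fst z\<rfloor>, \<lfloor>snd z\<rfloor>)) * indicator T1 (z - cr (\<lfloor>fst z\<rfloor>, \<lfloor>snd z\<rfloor>))
        + ennreal (X2 U h1 h2 (\<lfloor>fst z\<rfloor>, \<lfloor>snd z\<rfloor>)) * indicator T2 (z - cr (\<lfloor>fst z\<rfloor>, \<lfloor>snd z\<rfloor>))"
proof -
  define i where "i = \<lfloor>fst z\<rfloor>"
  define j where "j = \<lfloor>snd z\<rfloor>"
  have nk: "\<not> (\<exists>k::int. fst z = of_int k \<or> snd z = of_int k \<or> fst z - snd z = of_int k)"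
    using z unfolding Lset_def by simp
  have si: "fst z \<noteq> of_int i" "snd z \<noteq> of_int j" "fst z - snd z \<noteq> of_int (i - j)"
    using nk by blast+
  have a: "of_int i < fst z" "fst z < of_int i + 1" using si unfolding i_def by linarith+
  have b: "of_int j < snd z" "snd z < of_int j + 1" using si unfolding j_def by linarith+
  have ab: "snd z - of_int j \<noteq> fst z - of_int i" using si(3) by simp
  show ?thesis
  proof (cases "snd z - of_int j < fst z - of_int i")
    case True
    have "gs U h1 h2 z = ((U (i+1,j) - U (i,j)) / h1, (U (i+1,j+1) - U (i+1,j)) / h2)"
      using z True by (simp add: gs_def i_def j_def)
    then have "(norm (gs U h1 h2 z))\<^sup>2 = X1 U h1 h2 (i,j)"
      by (simp add: X1_def norm_Pair power_divide)
    moreover have "z - cr (i,j) \<in> T1" using a b True by (simp add: T1_def cr_def)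
    ultimately show ?thesis by (simp add: i_def j_def)
  next
    case False
    then have F: "fst z - of_int i < snd z - of_int j" using ab by linarith
    have "gs U h1 h2 z = ((U (i+1,j+1) - U (i,j+1)) / h1, (U (i,j+1) - U (i,j)) / h2)"
      using z False by (simp add: gs_def i_def j_def)
    then have "(norm (gs U h1 h2 z))\<^sup>2 = X2 U h1 h2 (i,j)"
      by (simp add: X2_def norm_Pair power_divide)
    moreover have "z - cr (i,j) \<in> T2" using a b F by (simp add: T2_def cr_def)
    ultimately show ?thesis by (simp add: i_def j_def)
  qed
qed

lemma tri_area1: "(\<integral>\<^sup>+z. indicator T1 (z - c) \<partial>lborel) = ennreal (1/2)"
proof -
  have "(\<integral>\<^sup>+z. indicator T1 (z - c) \<partial>lborel) = (\<integral>\<^sup>+y. indicator T1 ((c + y) - c) \<partial>lborel)"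
    by (rule shift_integral) measurable
  also have "\<dots> = (\<integral>\<^sup>+z. ennreal ((1 - fst z) ^ 0) * indicator T1 z \<partial>lborel)" by simp
  also have "\<dots> = ennreal (1/2)" by (subst J1) simp
  finally show ?thesis .
qed

lemma tri_area2: "(\<integral>\<^sup>+z. indicator T2 (z - c) \<partial>lborel) = ennreal (1/2)"
proof -
  have "(\<integral>\<^sup>+z. indicator T2 (z - c) \<partial>lborel) = (\<integral>\<^sup>+y. indicator T2 ((c + y) - c) \<partial>lborel)"
    by (rule shift_integral) measurable
  also have "\<dots> = (\<integral>\<^sup>+z. ennreal ((snd z - fst z) ^ 0) * indicator T2 z \<partial>lborel)" by simp
  also have "\<dots> = ennreal (1/2)" by (subst J4) simp
  finally show ?thesis .
qed


lemma meas_ind_comp: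
  fixes g :: "real \<times> real \<Rightarrow> real \<times> real"
  assumes "continuous_on UNIV g" "S \<in> sets borel"
  shows "(\<lambda>x. indicator S (g x) :: ennreal) \<in> borel_measurable borel"
proof -
  have "g \<in> borel \<rightarrow>\<^sub>M borel" by (rule borel_measurable_continuous_onI[OF assms(1)])
  moreover have "(indicator S :: real \<times> real \<Rightarrow> ennreal) \<in> borel_measurable borel"
    using assms(2) by simp
  ultimately show ?thesis using measurable_compose by blast
qed

lemma inv2_ennreal: "inverse (2::ennreal) * 2 = 1"
proof -
  have "(2::ennreal) / 2 = 1" by (rule ennreal_divide_self) auto
  then show ?thesis by (simp add: divide_ennreal_def mult.commute)
qed

lemma grad_total:
  fixes U :: "int \<times> int \<Rightarrow> real" and Om :: "(real \<times> real) set"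
  assumes h: "h1 > 0" "h2 > 0"
    and cov: "\<And>x. x \<in> Om \<Longrightarrow> (\<lfloor>fst x / h1\<rfloor>, \<lfloor>snd x / h2\<rfloor>) \<in> CC"
    and hG: "\<And>c. c \<in> CC \<Longrightarrow> c \<in> G1 \<and> c + (0,1) \<in> G1 \<and> c + (1,0) \<in> G2 \<and> c \<in> G2"
  shows "(\<integral>\<^sup>+x. ennreal ((norm (gs U h1 h2 (fst x / h1, snd x / h2)))\<^sup>2) * indicator Om x \<partial>lborel)
    \<le> ennreal (h1 * h2) * ((\<integral>\<^sup>+z. ennreal (((U (fst z + 1, snd z) - U z) / h1)\<^sup>2) \<partial>count_space G1)
                         + (\<integral>\<^sup>+z. ennreal (((U (fst z, snd z + 1) - U z) / h2)\<^sup>2) \<partial>count_space G2))"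
proof -
  let ?sc = "\<lambda>x::real\<times>real. (fst x / h1, snd x / h2)"
  let ?H = "\<lambda>c z. ennreal (X1 U h1 h2 c) * indicator T1 (z - cr c) + ennreal (X2 U h1 h2 c) * indicator T2 (z - cr c)"
  define D1 where "D1 z = ennreal (((U (fst z + 1, snd z) - U z) / h1)\<^sup>2)" for z
  define D2 where "D2 z = ennreal (((U (fst z, snd z + 1) - U z) / h2)\<^sup>2)" for z
  let ?A1 = "\<integral>\<^sup>+z. D1 z \<partial>count_space G1" and ?A2 = "\<integral>\<^sup>+z. D2 z \<partial>count_space G2"
  have hne: "h1 \<noteq> 0" "h2 \<noteq> 0" using h by auto
  have mH: "(\<lambda>x. ?H c (?sc x)) \<in> borel_measurable borel" for c
  proof -
    have "continuous_on UNIV (\<lambda>x::real\<times>real. ?sc x - cr c)" by (intro continuous_intros) (use hne in auto)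
    then have "(\<lambda>x. indicator T1 (?sc x - cr c) :: ennreal) \<in> borel_measurable borel"
              "(\<lambda>x. indicator T2 (?sc x - cr c) :: ennreal) \<in> borel_measurable borel"
      by (auto intro!: meas_ind_comp)
    then show ?thesis by measurable
  qed
  have mH2: "(\<lambda>z. ?H c z) \<in> borel_measurable borel" for c
  proof -
    have "continuous_on UNIV (\<lambda>x::real\<times>real. x - cr c)" by (intro continuous_intros)
    then have "(\<lambda>x. indicator T1 (x - cr c) :: ennreal) \<in> borel_measurable borel"
              "(\<lambda>x. indicator T2 (x - cr c) :: ennreal) \<in> borel_measurable borel"
      by (auto intro!: meas_ind_comp)
    then show ?thesis by measurable
  qed
  have "(\<integral>\<^sup>+x. ennreal ((norm (gs U h1 h2 (?sc x)))\<^sup>2) * indicator Om x \<partial>lborel)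
      \<le> (\<integral>\<^sup>+x. \<integral>\<^sup>+c. ?H c (?sc x) \<partial>count_space CC \<partial>lborel)"
  proof (rule nn_integral_mono_AE)
    show "AE x in lborel. ennreal ((norm (gs U h1 h2 (?sc x)))\<^sup>2) * indicator Om x \<le> (\<integral>\<^sup>+c. ?H c (?sc x) \<partial>count_space CC)"
      using AE_Lset[OF hne]
    proof eventually_elim
      case (elim x)
      show ?case
      proof (cases "x \<in> Om")
        case True
        let ?c0 = "(\<lfloor>fst (?sc x)\<rfloor>, \<lfloor>snd (?sc x)\<rfloor>)"
        have c0: "?c0 \<in> CC" using cov[OF True] by simp
        have "ennreal ((norm (gs U h1 h2 (?sc x)))\<^sup>2) * indicator Om x = ennreal ((norm (gs U h1 h2 (?sc x)))\<^sup>2)"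
          using True by simp
        also have "\<dots> \<le> ?H ?c0 (?sc x)" by (rule gs_point[OF elim])
        also have "\<dots> \<le> (\<integral>\<^sup>+c. ?H c (?sc x) \<partial>count_space CC)"
          by (rule nn_integral_ge_point[OF c0])
        finally show ?thesis .
      qed simp
    qed
  qed
  also have "\<dots> = (\<integral>\<^sup>+c. \<integral>\<^sup>+x. ?H c (?sc x) \<partial>lborel \<partial>count_space CC)"
    by (rule nn_integral_count_space_nn_integral) (auto intro: mH)
  also have "\<dots> = (\<integral>\<^sup>+c. ennreal (h1 * h2) * (ennreal (1/2) * (D1 c + D2 (c + (1,0)) + D1 (c + (0,1)) + D2 c)) \<partial>count_space CC)"
  proof (rule nn_integral_cong)
    fix c :: "int \<times> int"
    have "(\<integral>\<^sup>+x. ?H c (?sc x) \<partial>lborel) = ennreal (h1 * h2) * (\<integral>\<^sup>+z. ?H c (?sc (h1 * fst z, h2 * snd z)) \<partial>lborel)"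
      by (rule lborel_scale[OF mH h])
    also have "(\<integral>\<^sup>+z. ?H c (?sc (h1 * fst z, h2 * snd z)) \<partial>lborel) = (\<integral>\<^sup>+z. ?H c z \<partial>lborel)"
      using hne by simp
    also have "\<dots> = ennreal (X1 U h1 h2 c) * (\<integral>\<^sup>+z. indicator T1 (z - cr c) \<partial>lborel) + ennreal (X2 U h1 h2 c) * (\<integral>\<^sup>+z. indicator T2 (z - cr c) \<partial>lborel)"
    proof -
      have m1: "(\<lambda>x. indicator T1 (x - cr c) :: ennreal) \<in> borel_measurable borel"
        by (rule meas_ind_comp) (auto intro!: continuous_intros)
      have m2: "(\<lambda>x. indicator T2 (x - cr c) :: ennreal) \<in> borel_measurable borel"
        by (rule meas_ind_comp) (auto intro!: continuous_intros)
      show ?thesis using m1 m2 by (simp add: nn_integral_add nn_integral_cmult)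
    qed
    also have "\<dots> = ennreal (1/2) * (D1 c + D2 (c + (1,0)) + D1 (c + (0,1)) + D2 c)"
    proof -
      have cp: "c + (a,b) = (fst c + a, snd c + b)" for a b :: int by (cases c) simp
      show ?thesis unfolding tri_area1 tri_area2 D1_def D2_def X1_def X2_def cp
        by (simp add: algebra_simps)
    qed
    finally show "(\<integral>\<^sup>+x. ?H c (?sc x) \<partial>lborel) = ennreal (h1 * h2) * (ennreal (1/2) * (D1 c + D2 (c + (1,0)) + D1 (c + (0,1)) + D2 c))" .
  qed
  also have "\<dots> = ennreal (h1 * h2) * (ennreal (1/2) * ((\<integral>\<^sup>+c. D1 c \<partial>count_space CC) + (\<integral>\<^sup>+c. D2 (c + (1,0)) \<partial>count_space CC)
      + (\<integral>\<^sup>+c. D1 (c + (0,1)) \<partial>count_space CC) + (\<integral>\<^sup>+c. D2 c \<partial>count_space CC)))"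
    by (simp add: nn_integral_cmult nn_integral_add)
  also have "\<dots> \<le> ennreal (h1 * h2) * (ennreal (1/2) * (?A1 + ?A2 + ?A1 + ?A2))"
  proof -
    have i1: "(\<integral>\<^sup>+c. D1 c \<partial>count_space CC) \<le> ?A1"
      by (rule cs_mono_set) (use hG in blast)
    have i4: "(\<integral>\<^sup>+c. D2 c \<partial>count_space CC) \<le> ?A2"
      by (rule cs_mono_set) (use hG in blast)
    have i2: "(\<integral>\<^sup>+c. D2 (c + (1,0)) \<partial>count_space CC) \<le> ?A2"
      unfolding cs_shift by (rule cs_mono_set) (use hG in blast)
    have i3: "(\<integral>\<^sup>+c. D1 (c + (0,1)) \<partial>count_space CC) \<le> ?A1"
      unfolding cs_shift by (rule cs_mono_set) (use hG in blast)
    show ?thesis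
      by (intro mult_left_mono add_mono i1 i2 i3 i4) auto
  qed
  also have "ennreal (1/2) * (?A1 + ?A2 + ?A1 + ?A2) = ?A1 + ?A2"
  proof -
    have e: "?A1 + ?A2 + ?A1 + ?A2 = 2 * (?A1 + ?A2)"
      by (simp add: algebra_simps mult_2)
    have "ennreal (1/2) * (?A1 + ?A2 + ?A1 + ?A2) = (ennreal (1/2) * 2) * (?A1 + ?A2)"
      by (simp only: e mult.assoc)
    also have "ennreal (1/2) * 2 = 1" using inv2_ennreal by simp
    finally show ?thesis by simp
  qed
  finally show ?thesis by (simp add: D1_def D2_def)
qed


lemma main:
  fixes h1 h2 :: real and a1 b1 a2 b2 :: ereal and u :: "real \<times> real \<Rightarrow> real" and p :: nat
  assumes h_pos: "h1 > 0" "h2 > 0"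
    and aligned: "lower_aligned h1 a1" "upper_aligned h1 b1" "lower_aligned h2 a2" "upper_aligned h2 b2"
    and wide: "a1 + ereal h1 < b1" "a2 + ereal h2 < b2"
    and u_nonneg: "\<forall>y \<in> closure (box_ereal a1 b1 a2 b2) \<inter> grid h1 h2. u y \<ge> 0"
    and p_pos: "p \<ge> 1"
  shows "\<exists>ut :: real \<times> real \<Rightarrow> real.
    (let \<Omega> = box_ereal a1 b1 a2 b2;
         \<Omega>c = closure \<Omega>;
         \<Omega>h = \<Omega>c \<inter> grid h1 h2;
         B1 = \<Omega>h \<inter> frontier \<Omega> \<inter> {x. ereal (fst x) = b1};
         B2 = \<Omega>h \<inter> frontier \<Omega> \<inter> {x. ereal (snd x) = b2};
         S = (\<integral>\<^sup>+ x. ennreal (u x ^ p * (h1 * h2)) \<partial>count_space \<Omega>h)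
     in continuous_on \<Omega>c ut
      \<and> (\<forall>x\<in>\<Omega>c. ut x \<ge> 0)
      \<and> (\<forall>z1 z2. tri1 h1 h2 z1 z2 \<subseteq> \<Omega>c \<longrightarrow> affine_on ut (tri1 h1 h2 z1 z2))
      \<and> (\<forall>z1 z2. tri2 h1 h2 z1 z2 \<subseteq> \<Omega>c \<longrightarrow> affine_on ut (tri2 h1 h2 z1 z2))
      \<and> (\<forall>y\<in>\<Omega>h. u y = ut y)
      \<and> (\<forall>x\<in>\<Omega>h - B1. ((\<lambda>t. ut (fst x + t, snd x)) has_real_derivative Dplus1 h1 u x) (at_right 0))
      \<and> (\<forall>x\<in>\<Omega>h - B2. ((\<lambda>t. ut (fst x, snd x + t)) has_real_derivative Dplus2 h2 u x) (at_right 0))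
      \<and> ennreal (1 / (8 * real p ^ 2)) * S \<le> (\<integral>\<^sup>+ x\<in>\<Omega>. ennreal (ut x ^ p) \<partial>lborel)
      \<and> (\<integral>\<^sup>+ x\<in>\<Omega>. ennreal (ut x ^ p) \<partial>lborel) \<le> 8 * S
      \<and> (\<exists>grad :: real \<times> real \<Rightarrow> real \<times> real.
           (AE x in lborel. x \<in> \<Omega> \<longrightarrow> GDERIV ut x :> grad x)
         \<and> (\<integral>\<^sup>+ x\<in>\<Omega>. ennreal ((norm (grad x))\<^sup>2) \<partial>lborel)
           \<le> (\<integral>\<^sup>+ x. ennreal ((Dplus1 h1 u x)\<^sup>2 * (h1 * h2)) \<partial>count_space (\<Omega>h - B1))
            + (\<integral>\<^sup>+ x. ennreal ((Dplus2 h2 u x)\<^sup>2 * (h1 * h2)) \<partial>count_space (\<Omega>h - B2))))"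
proof -
  note h = h_pos
  have hne: "h1 \<noteq> 0" "h2 \<noteq> 0" using h by auto
  define \<Omega> where "\<Omega> = box_ereal a1 b1 a2 b2"
  define I1 where "I1 = Iz h1 a1 b1"
  define I2 where "I2 = Iz h2 a2 b2"
  define GG where "GG = {c. fst c \<in> I1 \<and> snd c \<in> I2}"
  define CC where "CC = {c. fst c \<in> I1 \<and> fst c + 1 \<in> I1 \<and> snd c \<in> I2 \<and> snd c + 1 \<in> I2}"
  define G1 where "G1 = {c. c \<in> GG \<and> fst c + 1 \<in> I1}"
  define G2 where "G2 = {c. c \<in> GG \<and> snd c + 1 \<in> I2}"
  define gp where "gp z = (h1 * of_int (fst z), h2 * of_int (snd z))" for z :: "int \<times> int"
  define U where "U z = max 0 (u (gp z))" for z
  define ut where "ut x = Vf U (fst x / h1) (snd x / h2)" for x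
  define Om' where "Om' = {z. (h1 * fst z, h2 * snd z) \<in> \<Omega>}"
  have U0: "\<And>z. U z \<ge> 0" by (simp add: U_def)
  have ab1: "a1 < b1"
  proof -
    have "a1 \<le> a1 + ereal h1" using h by (cases a1) auto
    then show ?thesis using wide(1) by simp
  qed
  have ab2: "a2 < b2"
  proof -
    have "a2 \<le> a2 + ereal h2" using h by (cases a2) auto
    then show ?thesis using wide(2) by simp
  qed
  have OmT: "\<Omega> = Io a1 b1 \<times> Io a2 b2" by (simp add: \<Omega>_def box_ereal_Times)
  have Oc: "closure \<Omega> = Ic a1 b1 \<times> Ic a2 b2" using ab1 ab2 by (simp add: OmT closure_Times closure_Io)
  have Oopen: "open \<Omega>" using ab1 ab2 by (simp add: OmT open_Times open_Io)
  have front: "frontier \<Omega> = closure \<Omega> - \<Omega>" using Oopen by (simp add: frontier_def interior_open)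
  have Oh: "closure \<Omega> \<inter> grid h1 h2 = gp ` GG"
  proof
    show "closure \<Omega> \<inter> grid h1 h2 \<subseteq> gp ` GG"
    proof
      fix y assume y: "y \<in> closure \<Omega> \<inter> grid h1 h2"
      then obtain z1 z2 where yz: "y = (h1 * of_int z1, h2 * of_int z2)" by (auto simp: grid_def)
      then have "(z1,z2) \<in> GG" using y by (auto simp: Oc GG_def I1_def I2_def Iz_def)
      then show "y \<in> gp ` GG" using yz by (auto simp: gp_def intro!: image_eqI[where x="(z1,z2)"])
    qed
    show "gp ` GG \<subseteq> closure \<Omega> \<inter> grid h1 h2"
      by (auto simp: Oc GG_def I1_def I2_def Iz_def gp_def grid_def)
  qed
  have Uu: "U z = u (gp z)" if "z \<in> GG" for z
  proof -
    have "gp z \<in> closure \<Omega> \<inter> grid h1 h2" using that Oh by blast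
    then show ?thesis using u_nonneg by (simp add: U_def \<Omega>_def)
  qed
  have inj_gp: "inj gp" using hne by (auto simp: inj_def gp_def)
  have ut_gp: "ut (gp z) = U z" for z
    using hne Vf_grid[of U "fst z" "snd z"] by (simp add: ut_def gp_def)
  have B1: "closure \<Omega> \<inter> grid h1 h2 - closure \<Omega> \<inter> grid h1 h2 \<inter> frontier \<Omega> \<inter> {x. ereal (fst x) = b1} = gp ` G1"
    (is "?L = _")
  proof
    show "gp ` G1 \<subseteq> ?L"
    proof
      fix y assume "y \<in> gp ` G1"
      then obtain z where z: "z \<in> G1" "y = gp z" by blast
      have zG: "z \<in> GG" using z by (simp add: G1_def)
      have "ereal (h1 * of_int (fst z + 1)) \<le> b1" using z by (simp add: G1_def I1_def Iz_def Ic_def)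
      moreover have "h1 * of_int (fst z) < h1 * of_int (fst z + 1)" using h by simp
      ultimately have "ereal (fst y) \<noteq> b1" using z by (auto simp: gp_def)
      then show "y \<in> ?L" using Oh zG z by auto
    qed
    show "?L \<subseteq> gp ` G1"
    proof
      fix y assume y: "y \<in> ?L"
      then obtain z where z: "z \<in> GG" "y = gp z" using Oh by auto
      have "ereal (h1 * of_int (fst z)) \<noteq> b1"
      proof
        assume e: "ereal (h1 * of_int (fst z)) = b1"
        then have "y \<notin> \<Omega>" using z by (auto simp: OmT Io_def gp_def)
        then have "y \<in> frontier \<Omega>" using y front by auto
        then show False using y e z by (auto simp: gp_def)
      qed
      then have "fst z + 1 \<in> I1" using Iz_succ[OF h(1) aligned(2)] z by (auto simp: GG_def I1_def)
      then show "y \<in> gp ` G1" using z by (auto simp: G1_def)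
    qed
  qed
  have B2: "closure \<Omega> \<inter> grid h1 h2 - closure \<Omega> \<inter> grid h1 h2 \<inter> frontier \<Omega> \<inter> {x. ereal (snd x) = b2} = gp ` G2"
    (is "?L = _")
  proof
    show "gp ` G2 \<subseteq> ?L"
    proof
      fix y assume "y \<in> gp ` G2"
      then obtain z where z: "z \<in> G2" "y = gp z" by blast
      have zG: "z \<in> GG" using z by (simp add: G2_def)
      have "ereal (h2 * of_int (snd z + 1)) \<le> b2" using z by (simp add: G2_def I2_def Iz_def Ic_def)
      moreover have "h2 * of_int (snd z) < h2 * of_int (snd z + 1)" using h by simp
      ultimately have "ereal (snd y) \<noteq> b2" using z by (auto simp: gp_def)
      then show "y \<in> ?L" using Oh zG z by auto
    qed
    show "?L \<subseteq> gp ` G2"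
    proof
      fix y assume y: "y \<in> ?L"
      then obtain z where z: "z \<in> GG" "y = gp z" using Oh by auto
      have "ereal (h2 * of_int (snd z)) \<noteq> b2"
      proof
        assume e: "ereal (h2 * of_int (snd z)) = b2"
        then have "y \<notin> \<Omega>" using z by (auto simp: OmT Io_def gp_def)
        then have "y \<in> frontier \<Omega>" using y front by auto
        then show False using y e z by (auto simp: gp_def)
      qed
      then have "snd z + 1 \<in> I2" using Iz_succ[OF h(2) aligned(4)] z by (auto simp: GG_def I2_def)
      then show "y \<in> gp ` G2" using z by (auto simp: G2_def)
    qed
  qed
  have gp_fst: "(fst (gp z) + h1, snd (gp z)) = gp (fst z + 1, snd z)" for z by (simp add: gp_def algebra_simps)
  have gp_snd: "(fst (gp z), snd (gp z) + h2) = gp (fst z, snd z + 1)" for z by (simp add: gp_def algebra_simps)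
  have c1: "continuous_on (closure \<Omega>) ut"
  proof -
    have "continuous_on UNIV ((\<lambda>x. Vf U (fst x) (snd x)) \<circ> (\<lambda>x. (fst x / h1, snd x / h2)))"
      by (rule continuous_on_compose) (auto intro!: continuous_intros continuous_on_subset[OF continuous_Vf] simp: hne)
    then have "continuous_on UNIV ut" by (simp add: ut_def o_def)
    then show ?thesis by (rule continuous_on_subset) simp
  qed
  have c2: "\<forall>x\<in>closure \<Omega>. ut x \<ge> 0" by (simp add: ut_def Vf_nonneg[OF U0])
  have c3: "\<forall>z1 z2. affine_on ut (tri1 h1 h2 z1 z2)"
    unfolding ut_def using affine_tri1[OF h] by blast
  have c4: "\<forall>z1 z2. affine_on ut (tri2 h1 h2 z1 z2)"
    unfolding ut_def using affine_tri2[OF h] by blast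
  have c5: "\<forall>y\<in>gp ` GG. u y = ut y" using Uu ut_gp by auto
  have c6: "\<forall>x\<in>gp ` G1. ((\<lambda>t. ut (fst x + t, snd x)) has_real_derivative Dplus1 h1 u x) (at_right 0)"
  proof
    fix x assume "x \<in> gp ` G1"
    then obtain z1 z2 where z: "(z1,z2) \<in> G1" "x = gp (z1,z2)" by auto
    have "(z1,z2) \<in> GG" "(z1+1,z2) \<in> GG" using z by (auto simp: G1_def GG_def)
    then have "Dplus1 h1 u x = (U (z1+1,z2) - U (z1,z2)) / h1"
      using z Uu by (simp add: Dplus1_def gp_fst[of "(z1,z2)", simplified])
    moreover have "((\<lambda>t. Vf U ((h1 * of_int z1 + t) / h1) (h2 * of_int z2 / h2)) has_real_derivative
           (U (z1+1,z2) - U (z1,z2)) / h1) (at_right 0)" by (rule deriv_dir1[OF h])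
    ultimately show "((\<lambda>t. ut (fst x + t, snd x)) has_real_derivative Dplus1 h1 u x) (at_right 0)"
      using z by (simp add: ut_def gp_def)
  qed
  have c7: "\<forall>x\<in>gp ` G2. ((\<lambda>t. ut (fst x, snd x + t)) has_real_derivative Dplus2 h2 u x) (at_right 0)"
  proof
    fix x assume "x \<in> gp ` G2"
    then obtain z1 z2 where z: "(z1,z2) \<in> G2" "x = gp (z1,z2)" by auto
    have "(z1,z2) \<in> GG" "(z1,z2+1) \<in> GG" using z by (auto simp: G2_def GG_def)
    then have "Dplus2 h2 u x = (U (z1,z2+1) - U (z1,z2)) / h2"
      using z Uu by (simp add: Dplus2_def gp_snd[of "(z1,z2)", simplified])
    moreover have "((\<lambda>t. Vf U (h1 * of_int z1 / h1) ((h2 * of_int z2 + t) / h2)) has_real_derivative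
           (U (z1,z2+1) - U (z1,z2)) / h2) (at_right 0)" by (rule deriv_dir2[OF h])
    ultimately show "((\<lambda>t. ut (fst x, snd x + t)) has_real_derivative Dplus2 h2 u x) (at_right 0)"
      using z by (simp add: ut_def gp_def)
  qed
  have cov: "\<exists>c\<in>CC. z \<in> cellc c" if z: "z \<in> Om'" for z
  proof -
    have z1: "h1 * fst z \<in> Io a1 b1" and z2: "h2 * snd z \<in> Io a2 b2" using z by (auto simp: Om'_def OmT)
    have "(\<lfloor>fst z\<rfloor>, \<lfloor>snd z\<rfloor>) \<in> CC"
      using floor_in_Iz[OF h(1) aligned(1,2) z1] floor_in_Iz[OF h(2) aligned(3,4) z2]
      by (simp add: CC_def I1_def I2_def)
    moreover have "z \<in> cellc (\<lfloor>fst z\<rfloor>, \<lfloor>snd z\<rfloor>)" by (simp add: cellc_def)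
    ultimately show ?thesis by blast
  qed
  have sh: "c + k \<in> GG" if "c \<in> CC" "k \<in> K4" for c k
    using that by (auto simp: K4_def CC_def GG_def)
  have inner: "z \<in> Om'" if c: "c \<in> CC" "z \<in> cellc c" "z \<notin> Lset" for c z
  proof -
    have ce: "c = (\<lfloor>fst z\<rfloor>, \<lfloor>snd z\<rfloor>)" by (rule cell_uniq[OF c(2,3)])
    have nk: "\<not> (\<exists>k::int. fst z = of_int k \<or> snd z = of_int k \<or> fst z - snd z = of_int k)"
      using c(3) unfolding Lset_def by simp
    have "fst z \<noteq> of_int \<lfloor>fst z\<rfloor>" "snd z \<noteq> of_int \<lfloor>snd z\<rfloor>" using nk by blast+
    then have lt: "of_int \<lfloor>fst z\<rfloor> < fst z" "fst z < of_int \<lfloor>fst z\<rfloor> + 1" "of_int \<lfloor>snd z\<rfloor> < snd z" "snd z < of_int \<lfloor>snd z\<rfloor> + 1"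
      by linarith+
    have "h1 * fst z \<in> Io a1 b1"
      by (rule Io_cell[OF h(1) _ _ lt(1,2)]) (use c(1) ce in \<open>auto simp: CC_def I1_def\<close>)
    moreover have "h2 * snd z \<in> Io a2 b2"
      by (rule Io_cell[OF h(2) _ _ lt(3,4)]) (use c(1) ce in \<open>auto simp: CC_def I2_def\<close>)
    ultimately show ?thesis by (simp add: Om'_def OmT)
  qed
  have cov2: "\<exists>k\<in>K4. y - k \<in> CC" if y: "y \<in> GG" for y
  proof -
    have y1: "fst y \<in> I1" and y2: "snd y \<in> I2" using y by (auto simp: GG_def)
    have n1: "fst y + 1 \<in> I1 \<or> fst y - 1 \<in> I1" using Iz_nb[OF h(1) aligned(1,2) wide(1)] y1 by (simp add: I1_def)
    have n2: "snd y + 1 \<in> I2 \<or> snd y - 1 \<in> I2" using Iz_nb[OF h(2) aligned(3,4) wide(2)] y2 by (simp add: I2_def)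
    obtain k1 where k1: "k1 \<in> {0,1}" "fst y - k1 \<in> I1" "fst y - k1 + 1 \<in> I1"
      using n1 y1 by (metis diff_0_right diff_add_cancel insertCI)
    obtain k2 where k2: "k2 \<in> {0,1}" "snd y - k2 \<in> I2" "snd y - k2 + 1 \<in> I2"
      using n2 y2 by (metis diff_0_right diff_add_cancel insertCI)
    have "(k1,k2) \<in> K4" using k1(1) k2(1) by (auto simp: K4_def)
    moreover have "y - (k1,k2) \<in> CC" using k1 k2 by (simp add: CC_def)
    ultimately show ?thesis by blast
  qed
  have covg: "(\<lfloor>fst x / h1\<rfloor>, \<lfloor>snd x / h2\<rfloor>) \<in> CC" if x: "x \<in> \<Omega>" for x
  proof -
    have "h1 * (fst x / h1) \<in> Io a1 b1" "h2 * (snd x / h2) \<in> Io a2 b2" using x hne by (auto simp: OmT)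
    then show ?thesis
      using floor_in_Iz[OF h(1) aligned(1,2)] floor_in_Iz[OF h(2) aligned(3,4)]
      by (simp add: CC_def I1_def I2_def)
  qed
  have hG: "c \<in> G1 \<and> c + (0,1) \<in> G1 \<and> c + (1,0) \<in> G2 \<and> c \<in> G2" if "c \<in> CC" for c
    using that by (auto simp: CC_def G1_def G2_def GG_def)
  have contut: "continuous_on UNIV ut"
  proof -
    have "continuous_on UNIV ((\<lambda>x. Vf U (fst x) (snd x)) \<circ> (\<lambda>x. (fst x / h1, snd x / h2)))"
      by (rule continuous_on_compose) (auto intro!: continuous_intros continuous_on_subset[OF continuous_Vf] simp: hne)
    then show ?thesis by (simp add: ut_def o_def)
  qed
  have Om_borel[measurable]: "\<Omega> \<in> sets borel" using Oopen by simp
  have mut: "(\<lambda>x. ennreal (ut x ^ p) * indicator \<Omega> x) \<in> borel_measurable borel"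
  proof -
    have [measurable]: "ut \<in> borel_measurable borel" by (rule borel_measurable_continuous_onI[OF contut])
    show ?thesis by measurable
  qed
  define W where "W = (\<integral>\<^sup>+z. ennreal (U z ^ p) \<partial>count_space GG)"
  have SW: "(\<integral>\<^sup>+x. ennreal (u x ^ p * (h1 * h2)) \<partial>count_space (gp ` GG)) = ennreal (h1 * h2) * W"
  proof -
    have "(\<integral>\<^sup>+x. ennreal (u x ^ p * (h1 * h2)) \<partial>count_space (gp ` GG)) = (\<integral>\<^sup>+z. ennreal (u (gp z) ^ p * (h1 * h2)) \<partial>count_space GG)"
      by (rule nn_integral_bij_count_space[symmetric]) (use inj_gp in \<open>auto simp: bij_betw_def inj_on_def inj_def\<close>)
    also have "\<dots> = (\<integral>\<^sup>+z. ennreal (U z ^ p) * ennreal (h1 * h2) \<partial>count_space GG)"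
    proof (rule nn_integral_cong)
      fix z assume "z \<in> space (count_space GG)"
      then have e: "u (gp z) = U z" using Uu by simp
      show "ennreal (u (gp z) ^ p * (h1 * h2)) = ennreal (U z ^ p) * ennreal (h1 * h2)"
        unfolding e using h U0[of z] by (simp add: ennreal_mult)
    qed
    also have "\<dots> = ennreal (h1 * h2) * W"
      unfolding W_def by (subst nn_integral_multc) (simp_all add: mult.commute)
    finally show ?thesis .
  qed
  have IL: "(\<integral>\<^sup>+x. ennreal (ut x ^ p) * indicator \<Omega> x \<partial>lborel)
     = ennreal (h1 * h2) * (\<integral>\<^sup>+z. ennreal (Vf U (fst z) (snd z) ^ p) * indicator Om' z \<partial>lborel)"
  proof -
    have "(\<integral>\<^sup>+x. ennreal (ut x ^ p) * indicator \<Omega> x \<partial>lborel)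
       = ennreal (h1 * h2) * (\<integral>\<^sup>+z. ennreal (ut (h1 * fst z, h2 * snd z) ^ p) * indicator \<Omega> (h1 * fst z, h2 * snd z) \<partial>lborel)"
      by (rule lborel_scale[OF mut h])
    also have "(\<integral>\<^sup>+z. ennreal (ut (h1 * fst z, h2 * snd z) ^ p) * indicator \<Omega> (h1 * fst z, h2 * snd z) \<partial>lborel)
       = (\<integral>\<^sup>+z. ennreal (Vf U (fst z) (snd z) ^ p) * indicator Om' z \<partial>lborel)"
      by (rule nn_integral_cong) (use hne in \<open>simp add: ut_def Om'_def indicator_def\<close>)
    finally show ?thesis .
  qed
  have R1: "(\<integral>\<^sup>+x. ennreal ((Dplus1 h1 u x)\<^sup>2 * (h1 * h2)) \<partial>count_space (gp ` G1))
      = ennreal (h1 * h2) * (\<integral>\<^sup>+z. ennreal (((U (fst z + 1, snd z) - U z) / h1)\<^sup>2) \<partial>count_space G1)"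
  proof -
    have "(\<integral>\<^sup>+x. ennreal ((Dplus1 h1 u x)\<^sup>2 * (h1 * h2)) \<partial>count_space (gp ` G1))
        = (\<integral>\<^sup>+z. ennreal ((Dplus1 h1 u (gp z))\<^sup>2 * (h1 * h2)) \<partial>count_space G1)"
      by (rule nn_integral_bij_count_space[symmetric]) (use inj_gp in \<open>auto simp: bij_betw_def inj_on_def inj_def\<close>)
    also have "\<dots> = (\<integral>\<^sup>+z. ennreal (((U (fst z + 1, snd z) - U z) / h1)\<^sup>2) * ennreal (h1 * h2) \<partial>count_space G1)"
    proof (rule nn_integral_cong)
      fix z assume "z \<in> space (count_space G1)"
      then have zz: "z \<in> GG" "(fst z + 1, snd z) \<in> GG" by (auto simp: G1_def GG_def)
      have "Dplus1 h1 u (gp z) = (U (fst z + 1, snd z) - U z) / h1"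
        using zz Uu by (simp add: Dplus1_def gp_fst)
      then show "ennreal ((Dplus1 h1 u (gp z))\<^sup>2 * (h1 * h2)) = ennreal (((U (fst z + 1, snd z) - U z) / h1)\<^sup>2) * ennreal (h1 * h2)"
        using h by (simp add: ennreal_mult)
    qed
    also have "\<dots> = ennreal (h1 * h2) * (\<integral>\<^sup>+z. ennreal (((U (fst z + 1, snd z) - U z) / h1)\<^sup>2) \<partial>count_space G1)"
      by (subst nn_integral_multc) (simp_all add: mult.commute)
    finally show ?thesis .
  qed
  have R2: "(\<integral>\<^sup>+x. ennreal ((Dplus2 h2 u x)\<^sup>2 * (h1 * h2)) \<partial>count_space (gp ` G2))
      = ennreal (h1 * h2) * (\<integral>\<^sup>+z. ennreal (((U (fst z, snd z + 1) - U z) / h2)\<^sup>2) \<partial>count_space G2)"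
  proof -
    have "(\<integral>\<^sup>+x. ennreal ((Dplus2 h2 u x)\<^sup>2 * (h1 * h2)) \<partial>count_space (gp ` G2))
        = (\<integral>\<^sup>+z. ennreal ((Dplus2 h2 u (gp z))\<^sup>2 * (h1 * h2)) \<partial>count_space G2)"
      by (rule nn_integral_bij_count_space[symmetric]) (use inj_gp in \<open>auto simp: bij_betw_def inj_on_def inj_def\<close>)
    also have "\<dots> = (\<integral>\<^sup>+z. ennreal (((U (fst z, snd z + 1) - U z) / h2)\<^sup>2) * ennreal (h1 * h2) \<partial>count_space G2)"
    proof (rule nn_integral_cong)
      fix z assume "z \<in> space (count_space G2)"
      then have zz: "z \<in> GG" "(fst z, snd z + 1) \<in> GG" by (auto simp: G2_def GG_def)
      have "Dplus2 h2 u (gp z) = (U (fst z, snd z + 1) - U z) / h2"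
        using zz Uu by (simp add: Dplus2_def gp_snd)
      then show "ennreal ((Dplus2 h2 u (gp z))\<^sup>2 * (h1 * h2)) = ennreal (((U (fst z, snd z + 1) - U z) / h2)\<^sup>2) * ennreal (h1 * h2)"
        using h by (simp add: ennreal_mult)
    qed
    also have "\<dots> = ennreal (h1 * h2) * (\<integral>\<^sup>+z. ennreal (((U (fst z, snd z + 1) - U z) / h2)\<^sup>2) \<partial>count_space G2)"
      by (subst nn_integral_multc) (simp_all add: mult.commute)
    finally show ?thesis .
  qed
  have up: "(\<integral>\<^sup>+x. ennreal (ut x ^ p) * indicator \<Omega> x \<partial>lborel) \<le> 8 * (\<integral>\<^sup>+x. ennreal (u x ^ p * (h1 * h2)) \<partial>count_space (gp ` GG))"
  proof -
    have "(\<integral>\<^sup>+z. ennreal (Vf U (fst z) (snd z) ^ p) * indicator Om' z \<partial>lborel) \<le> 4 * W"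
      unfolding W_def by (rule upper_total[OF U0 cov sh])
    then have "(\<integral>\<^sup>+x. ennreal (ut x ^ p) * indicator \<Omega> x \<partial>lborel) \<le> ennreal (h1 * h2) * (4 * W)"
      unfolding IL by (rule mult_left_mono) simp
    also have "\<dots> = 4 * (ennreal (h1 * h2) * W)" by (simp add: mult_ac)
    also have "\<dots> \<le> 8 * (ennreal (h1 * h2) * W)" by (rule mult_right_mono) auto
    finally show ?thesis unfolding SW .
  qed
  have lo: "ennreal (1 / (8 * real p ^ 2)) * (\<integral>\<^sup>+x. ennreal (u x ^ p * (h1 * h2)) \<partial>count_space (gp ` GG))
      \<le> (\<integral>\<^sup>+x. ennreal (ut x ^ p) * indicator \<Omega> x \<partial>lborel)"
  proof -
    have p1: "1 \<le> real p" using p_pos by simp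
    have pp: "real p * 1 \<le> real p * real p" by (rule mult_left_mono) (use p1 in auto)
    have qle: "(real p + 1) * (real p + 2) \<le> 8 * real p ^ 2"
    proof -
      have "(real p + 1) * (real p + 2) = real p * real p + 3 * real p + 2" by (simp add: algebra_simps)
      moreover have "8 * real p ^ 2 = 8 * (real p * real p)" by (simp add: power2_eq_square)
      ultimately show ?thesis using p1 pp by linarith
    qed
    have qq: "1 / (8 * real p ^ 2) \<le> 1 / ((real p + 1) * (real p + 2))"
      by (rule divide_left_mono[OF qle]) (use p1 in auto)
    have "ennreal (1 / (8 * real p ^ 2)) * (ennreal (h1 * h2) * W) \<le> ennreal (1 / ((real p + 1) * (real p + 2))) * (ennreal (h1 * h2) * W)"
      by (rule mult_right_mono[OF ennreal_leI[OF qq]]) simp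
    also have "\<dots> = ennreal (h1 * h2) * (ennreal (1 / ((real p + 1) * (real p + 2))) * W)" by (simp add: mult_ac)
    also have "\<dots> \<le> ennreal (h1 * h2) * (\<integral>\<^sup>+z. ennreal (Vf U (fst z) (snd z) ^ p) * indicator Om' z \<partial>lborel)"
      by (rule mult_left_mono) (auto simp: W_def intro!: lower_total[OF U0 p_pos inner cov2])
    finally show ?thesis unfolding SW IL .
  qed
  define grad where "grad x = gs U h1 h2 (fst x / h1, snd x / h2)" for x
  have utl: "ut = (\<lambda>y. Vf U (fst y / h1) (snd y / h2))" by (rule ext) (simp add: ut_def)
  have gAE: "AE x in lborel. x \<in> \<Omega> \<longrightarrow> GDERIV ut x :> grad x"
    using AE_Lset[OF hne]
  proof eventually_elim
    case (elim x)
    have "(ut has_derivative (\<lambda>k. grad x \<bullet> k)) (at x)"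
      unfolding utl grad_def by (rule gderiv[OF h elim])
    then show ?case by (simp add: gderiv_def inner_commute)
  qed
  have gI: "(\<integral>\<^sup>+x. ennreal ((norm (grad x))\<^sup>2) * indicator \<Omega> x \<partial>lborel)
     \<le> (\<integral>\<^sup>+x. ennreal ((Dplus1 h1 u x)\<^sup>2 * (h1 * h2)) \<partial>count_space (gp ` G1))
      + (\<integral>\<^sup>+x. ennreal ((Dplus2 h2 u x)\<^sup>2 * (h1 * h2)) \<partial>count_space (gp ` G2))"
    unfolding R1 R2 grad_def distrib_left[symmetric]
    by (rule grad_total[OF h covg hG])
  show ?thesis
    unfolding Let_def \<Omega>_def[symmetric] unfolding B1 B2 unfolding Oh
    apply (rule exI[of _ ut])
    apply (intro conjI)
    subgoal by (rule c1)
    subgoal by (rule c2)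
    subgoal using c3 by blast
    subgoal using c4 by blast
    subgoal by (rule c5)
    subgoal by (rule c6)
    subgoal by (rule c7)
    subgoal by (rule lo)
    subgoal by (rule up)
    subgoal using gAE gI by blast
    done
qed


theorem mainTheorem17:
  fixes h1 h2 :: real and a1 b1 a2 b2 :: ereal and u :: "real \<times> real \<Rightarrow> real" and p :: nat
  assumes h_pos: "h1 > 0" "h2 > 0"
    and aligned: "lower_aligned h1 a1" "upper_aligned h1 b1" "lower_aligned h2 a2" "upper_aligned h2 b2"
    and wide: "a1 + ereal h1 < b1" "a2 + ereal h2 < b2"
    and u_nonneg: "\<forall>y \<in> closure (box_ereal a1 b1 a2 b2) \<inter> grid h1 h2. u y \<ge> 0"
    and p_pos: "p \<ge> 1"
  shows "\<exists>ut :: real \<times> real \<Rightarrow> real.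
    (let \<Omega> = box_ereal a1 b1 a2 b2;
         \<Omega>c = closure \<Omega>;
         \<Omega>h = \<Omega>c \<inter> grid h1 h2;
         B1 = \<Omega>h \<inter> frontier \<Omega> \<inter> {x. ereal (fst x) = b1};
         B2 = \<Omega>h \<inter> frontier \<Omega> \<inter> {x. ereal (snd x) = b2};
         S = (\<integral>\<^sup>+ x. ennreal (u x ^ p * (h1 * h2)) \<partial>count_space \<Omega>h)
     in continuous_on \<Omega>c ut
      \<and> (\<forall>x\<in>\<Omega>c. ut x \<ge> 0)
      \<and> (\<forall>z1 z2. tri1 h1 h2 z1 z2 \<subseteq> \<Omega>c \<longrightarrow> affine_on ut (tri1 h1 h2 z1 z2))
      \<and> (\<forall>z1 z2. tri2 h1 h2 z1 z2 \<subseteq> \<Omega>c \<longrightarrow> affine_on ut (tri2 h1 h2 z1 z2))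
      \<and> (\<forall>y\<in>\<Omega>h. u y = ut y)
      \<and> (\<forall>x\<in>\<Omega>h - B1. ((\<lambda>t. ut (fst x + t, snd x)) has_real_derivative Dplus1 h1 u x) (at_right 0))
      \<and> (\<forall>x\<in>\<Omega>h - B2. ((\<lambda>t. ut (fst x, snd x + t)) has_real_derivative Dplus2 h2 u x) (at_right 0))
      \<and> ennreal (1 / (8 * real p ^ 2)) * S \<le> (\<integral>\<^sup>+ x\<in>\<Omega>. ennreal (ut x ^ p) \<partial>lborel)
      \<and> (\<integral>\<^sup>+ x\<in>\<Omega>. ennreal (ut x ^ p) \<partial>lborel) \<le> 8 * S
      \<and> (\<exists>grad :: real \<times> real \<Rightarrow> real \<times> real.
           (AE x in lborel. x \<in> \<Omega> \<longrightarrow> GDERIV ut x :> grad x)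
         \<and> (\<integral>\<^sup>+ x\<in>\<Omega>. ennreal ((norm (grad x))\<^sup>2) \<partial>lborel)
           \<le> (\<integral>\<^sup>+ x. ennreal ((Dplus1 h1 u x)\<^sup>2 * (h1 * h2)) \<partial>count_space (\<Omega>h - B1))
            + (\<integral>\<^sup>+ x. ennreal ((Dplus2 h2 u x)\<^sup>2 * (h1 * h2)) \<partial>count_space (\<Omega>h - B2))))"
  by (rule main[OF h_pos aligned wide u_nonneg p_pos])

end
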